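(* Let $n\geq 16$ and let $D\subseteq X^n$ be a set such that any two distinct words of $D$ are at Hamming distance $3$ or $4$. Then $|D|\leq n$.
   Context: $X^n$ is the set of words of length $n$ over the alphabet $\{*,0,1\}$ containing exactly one symbol $*$. The Hamming distance between two words is the number of coordinates in which they differ. *)

theory Defs
  imports Main
begin

datatype sym = Star | Zero | One

definition X :: "nat \<Rightarrow> sym list set" where
  "X n = {w. length w = n \<and> card {i. i < n \<and> w ! i = Star} = 1}"

definition hamming :: "sym list \<Rightarrow> sym list \<Rightarrow> nat" where
  "hamming u v = card {i. i < length u \<and> u ! i \<noteq> v ! i}"

end

theory Submission
  imports Defs
begin

lemma xor3: "a \<noteq> Star \<Longrightarrow> b \<noteq> Star \<Longrightarrow> c \<noteq> Star \<Longrightarrow> (b \<noteq> c) = ((a \<noteq> b) \<noteq> (a \<noteq> c))"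
  by (cases a; cases b; cases c) auto

lemma three_bits: "a \<noteq> Star \<Longrightarrow> b \<noteq> Star \<Longrightarrow> c \<noteq> Star \<Longrightarrow> a \<noteq> b \<Longrightarrow> a \<noteq> c \<Longrightarrow> b = c"
  by (cases a; cases b; cases c) auto

lemma card_split2: "finite Z \<Longrightarrow> Z \<subseteq> A \<union> B \<Longrightarrow> A \<inter> B = {} \<Longrightarrow> card Z = card (Z \<inter> A) + card (Z \<inter> B)"
proof -
  assume f: "finite Z" and s: "Z \<subseteq> A \<union> B" and d: "A \<inter> B = {}"
  have "Z = (Z \<inter> A) \<union> (Z \<inter> B)" using s by blast
  moreover have "card ((Z \<inter> A) \<union> (Z \<inter> B)) = card (Z \<inter> A) + card (Z \<inter> B)"
    using f d by (intro card_Un_disjoint) auto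
  ultimately show ?thesis by simp
qed

lemma card_split3: "finite Z \<Longrightarrow> Z \<subseteq> A \<union> B \<union> C \<Longrightarrow> A \<inter> B = {} \<Longrightarrow> A \<inter> C = {} \<Longrightarrow> B \<inter> C = {}
  \<Longrightarrow> card Z = card (Z \<inter> A) + card (Z \<inter> B) + card (Z \<inter> C)"
proof -
  assume f: "finite Z" and s: "Z \<subseteq> A \<union> B \<union> C" and d: "A \<inter> B = {}" "A \<inter> C = {}" "B \<inter> C = {}"
  have "card Z = card (Z \<inter> A) + card (Z \<inter> (B \<union> C))"
    using f s d by (intro card_split2) auto
  moreover have "card (Z \<inter> (B \<union> C)) = card (Z \<inter> (B \<union> C) \<inter> B) + card (Z \<inter> (B \<union> C) \<inter> C)"
    using f d by (intro card_split2) auto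
  moreover have "Z \<inter> (B \<union> C) \<inter> B = Z \<inter> B" "Z \<inter> (B \<union> C) \<inter> C = Z \<inter> C" by auto
  ultimately show ?thesis by simp
qed

lemma card_symdiff: "finite A \<Longrightarrow> finite B \<Longrightarrow> card ((A - B) \<union> (B - A)) + 2 * card (A \<inter> B) = card A + card B"
proof -
  assume fa: "finite A" and fb: "finite B"
  have "card ((A - B) \<union> (B - A)) = card (A - B) + card (B - A)"
    using fa fb by (intro card_Un_disjoint) auto
  moreover have "card A = card (A \<inter> B) + card (A - B)" using fa by (rule card_Int_Diff)
  moreover have "card B = card (B \<inter> A) + card (B - A)" using fb by (rule card_Int_Diff)
  moreover have "B \<inter> A = A \<inter> B" by blast
  ultimately show ?thesis by simp
qed

lemma finite_X: "finite (X n)"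
proof -
  have "UNIV = {Star, Zero, One}" by (auto intro: sym.exhaust)
  hence fu: "finite (UNIV :: sym set)" by (metis finite.emptyI finite.insertI)
  have "X n \<subseteq> {xs. set xs \<subseteq> UNIV \<and> length xs = n}" unfolding X_def by auto
  thus ?thesis using finite_lists_length_eq[OF fu] finite_subset by blast
qed

locale cfg =
  fixes n :: nat and D :: "sym list set"
  assumes DX: "D \<subseteq> X n"
    and good: "\<forall>u\<in>D. \<forall>v\<in>D. u \<noteq> v \<longrightarrow> hamming u v = 3 \<or> hamming u v = 4"
begin

definition dif :: "sym list \<Rightarrow> sym list \<Rightarrow> nat set" where
  "dif a b = {i. i < n \<and> a ! i \<noteq> b ! i}"
definition sp :: "sym list \<Rightarrow> nat" where
  "sp w = (THE i. i < n \<and> w ! i = Star)"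
definition Cl :: "nat \<Rightarrow> sym list set" where
  "Cl r = {w\<in>D. sp w = r}"

lemma finD: "finite D" using DX finite_X finite_subset by blast

lemma len: "w \<in> D \<Longrightarrow> length w = n" using DX unfolding X_def by auto

lemma starset: assumes "w \<in> D" shows "\<exists>k. {i. i < n \<and> w!i = Star} = {k}"
proof -
  have "card {i. i < n \<and> w!i = Star} = 1" using assms DX unfolding X_def by auto
  thus ?thesis by (simp add: card_1_singleton_iff)
qed

lemma sp: assumes "w \<in> D" shows "sp w < n" "w ! sp w = Star"
proof -
  obtain k where k: "{i. i < n \<and> w!i = Star} = {k}" using starset[OF assms] by blast
  have "\<And>i. (i < n \<and> w!i = Star) = (i = k)" using k by blast
  hence "sp w = k" unfolding sp_def by simp
  thus "sp w < n" "w ! sp w = Star" using k by auto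
qed

lemma sp_uniq: assumes "w \<in> D" "i < n" "w ! i = Star" shows "i = sp w"
proof -
  obtain k where k: "{i. i < n \<and> w!i = Star} = {k}" using starset[OF assms(1)] by blast
  have "\<And>i. (i < n \<and> w!i = Star) = (i = k)" using k by blast
  hence "sp w = k" unfolding sp_def by simp
  thus ?thesis using k assms by auto
qed

lemma ns: "w \<in> D \<Longrightarrow> i < n \<Longrightarrow> i \<noteq> sp w \<Longrightarrow> w ! i \<noteq> Star"
  using sp_uniq by blast

lemma fin_dif: "finite (dif a b)" unfolding dif_def by auto
lemma dif_lt: "dif a b \<subseteq> {..<n}" unfolding dif_def by auto
lemma dif_sym: "dif a b = dif b a" unfolding dif_def by auto
lemma in_dif: "i \<in> dif a b \<longleftrightarrow> i < n \<and> a ! i \<noteq> b ! i" unfolding dif_def by auto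

lemma hd: "a \<in> D \<Longrightarrow> hamming a b = card (dif a b)"
  unfolding hamming_def dif_def using len by simp

lemma d34: "a \<in> D \<Longrightarrow> b \<in> D \<Longrightarrow> a \<noteq> b \<Longrightarrow> card (dif a b) = 3 \<or> card (dif a b) = 4"
  using good hd by metis

lemma le4: "a \<in> D \<Longrightarrow> b \<in> D \<Longrightarrow> card (dif a b) \<le> 4"
proof -
  assume "a \<in> D" "b \<in> D"
  thus ?thesis
  proof (cases "a = b")
    case True thus ?thesis unfolding dif_def by simp
  qed (use d34 in fastforce)
qed

lemma ge3: "a \<in> D \<Longrightarrow> b \<in> D \<Longrightarrow> card (dif a b) \<le> 2 \<Longrightarrow> a = b"
  using d34 by fastforce

lemma sp_in_dif: assumes "a \<in> D" "b \<in> D" "sp a \<noteq> sp b" shows "sp a \<in> dif a b"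
proof -
  have "sp a < n" "a ! sp a = Star" using sp[OF assms(1)] by auto
  moreover have "b ! sp a \<noteq> Star" using ns[OF assms(2)] assms(3) calculation(1) by auto
  ultimately show ?thesis unfolding dif_def by auto
qed

lemma sp_in_dif2: "a \<in> D \<Longrightarrow> b \<in> D \<Longrightarrow> sp a \<noteq> sp b \<Longrightarrow> sp b \<in> dif a b"
  using sp_in_dif[of b a] dif_sym by auto

lemma sp_notin: assumes "a \<in> D" "b \<in> D" "sp a = sp b" shows "sp a \<notin> dif a b"
proof -
  have "a ! sp a = Star" by (rule sp(2)[OF assms(1)])
  moreover have "b ! sp b = Star" by (rule sp(2)[OF assms(2)])
  ultimately show ?thesis using assms(3) unfolding dif_def by simp
qed

lemma xor_dif: "a \<in> D \<Longrightarrow> b \<in> D \<Longrightarrow> c \<in> D \<Longrightarrow> i < n \<Longrightarrow> i \<noteq> sp a \<Longrightarrow> i \<noteq> sp b \<Longrightarrow> i \<noteq> sp c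
  \<Longrightarrow> (i \<in> dif b c) = ((i \<in> dif a b) \<noteq> (i \<in> dif a c))"
  unfolding dif_def using xor3 ns by simp

lemma bit_eq: "a \<in> D \<Longrightarrow> b \<in> D \<Longrightarrow> c \<in> D \<Longrightarrow> i < n \<Longrightarrow> i \<noteq> sp a \<Longrightarrow> i \<noteq> sp b \<Longrightarrow> i \<noteq> sp c
  \<Longrightarrow> a ! i \<noteq> b ! i \<Longrightarrow> a ! i \<noteq> c ! i \<Longrightarrow> b ! i = c ! i"
  using three_bits[of "a!i" "b!i" "c!i"] ns[of a i] ns[of b i] ns[of c i] by blast

end

lemma three_elems: assumes "finite F" "3 \<le> card F"
  shows "\<exists>x y z. x \<in> F \<and> y \<in> F \<and> z \<in> F \<and> x \<noteq> y \<and> x \<noteq> z \<and> y \<noteq> z"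
proof -
  obtain x where x: "x \<in> F" using assms by fastforce
  have "2 \<le> card (F - {x})" using assms x by (simp add: card_Diff_singleton)
  hence "F - {x} \<noteq> {}" by (intro notI) simp
  then obtain y where y: "y \<in> F - {x}" by blast
  have "1 \<le> card (F - {x} - {y})" using assms x y by (simp add: card_Diff_singleton)
  hence "F - {x} - {y} \<noteq> {}" by (intro notI) simp
  then obtain z where z: "z \<in> F - {x} - {y}" by blast
  show ?thesis using x y z by blast
qed

context cfg begin

lemma card_le2: assumes "\<And>x y z. x \<in> F \<Longrightarrow> y \<in> F \<Longrightarrow> z \<in> F \<Longrightarrow> x \<noteq> y \<Longrightarrow> x \<noteq> z \<Longrightarrow> y \<noteq> z \<Longrightarrow> False"
  "F \<subseteq> D" shows "card F \<le> 2"
proof (rule ccontr)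
  assume "\<not> card F \<le> 2"
  hence "3 \<le> card F" by simp
  moreover have "finite F" using assms(2) finD finite_subset by blast
  ultimately show False using three_elems assms(1) by metis
qed

end

locale pr = cfg +
  fixes u u' :: "sym list"
  assumes uD: "u \<in> D" and u'D: "u' \<in> D" and uu: "u \<noteq> u'" and spu: "sp u' = sp u"
begin

definition p where "p = sp u"
definition S where "S = dif u u'"
definition T where "T = {..<n} - S - {p}"

lemma p_lt: "p < n" using sp uD p_def by auto
lemma spu': "sp u' = p" using spu p_def by simp
lemma pS: "p \<notin> S" unfolding S_def p_def using sp_notin[OF uD u'D] spu by auto
lemma S_lt: "S \<subseteq> {..<n}" unfolding S_def by (rule dif_lt)
lemma finS: "finite S" using S_lt finite_subset by blast
lemma finT: "finite T" unfolding T_def by auto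
lemma cS: "card S = 3 \<or> card S = 4" unfolding S_def using d34 uD u'D uu by auto
lemma inT: "i \<in> T \<longleftrightarrow> i < n \<and> i \<notin> S \<and> i \<noteq> p" unfolding T_def by auto
lemma ST: "S \<inter> T = {}" unfolding T_def by auto
lemma cover: "i < n \<Longrightarrow> i = p \<or> i \<in> S \<or> i \<in> T" using inT by auto
lemma cT: "card T = n - card S - 1"
proof -
  have "card ({..<n} - S) = n - card S" using S_lt finS by (simp add: card_Diff_subset)
  moreover have "p \<in> {..<n} - S" using p_lt pS by auto
  ultimately show ?thesis unfolding T_def by (simp add: card_Diff_singleton)
qed

lemma flipS: assumes "a \<in> D" "i \<in> S" "i \<noteq> sp a" shows "(i \<in> dif u' a) = (i \<notin> dif u a)"
proof -
  have "i < n" "i \<noteq> sp u" "i \<noteq> sp u'" using assms S_lt pS spu' p_def by auto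
  hence "(i \<in> dif u' a) = ((i \<in> dif u u') \<noteq> (i \<in> dif u a))"
    using xor_dif[OF uD u'D assms(1)] assms(3) by blast
  thus ?thesis using assms(2) S_def by simp
qed

lemma flipT: assumes "a \<in> D" "i \<in> T" "i \<noteq> sp a" shows "(i \<in> dif u' a) = (i \<in> dif u a)"
proof -
  have "i < n" "i \<noteq> sp u" "i \<noteq> sp u'" "i \<notin> S" using assms inT spu' p_def by auto
  hence "(i \<in> dif u' a) = ((i \<in> dif u u') \<noteq> (i \<in> dif u a))"
    using xor_dif[OF uD u'D assms(1)] assms(3) by blast
  thus ?thesis using \<open>i \<notin> S\<close> S_def by simp
qed

lemma ext:
  assumes aD: "a \<in> D" and r: "sp a \<noteq> p"
  shows "card (dif u a) = 2 + card (dif u a \<inter> (S - {sp a})) + card (dif u a \<inter> (T - {sp a}))"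
    and "card (dif u' a) = 2 + (card (S - {sp a}) - card (dif u a \<inter> (S - {sp a}))) + card (dif u a \<inter> (T - {sp a}))"
    and "card (dif u a \<inter> (S - {sp a})) \<le> card (S - {sp a})"
proof -
  define r where "r = sp a"
  have rn: "r < n" using sp aD r_def by auto
  have rp: "r \<noteq> p" using r r_def by simp
  define R2 where "R2 = S - {r}"
  define R3 where "R3 = T - {r}"
  have cov: "dif u a \<subseteq> {p, r} \<union> R2 \<union> R3" "dif u' a \<subseteq> {p, r} \<union> R2 \<union> R3"
    using dif_lt cover unfolding R2_def R3_def by blast+
  have dj: "{p,r} \<inter> R2 = {}" "{p,r} \<inter> R3 = {}" "R2 \<inter> R3 = {}" using pS ST inT unfolding R2_def R3_def by auto
  have spne: "sp u \<noteq> sp a" "sp u' \<noteq> sp a" using r spu' p_def by auto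
  have e1: "dif u a \<inter> {p, r} = {p, r}"
    using sp_in_dif[OF uD aD spne(1)] sp_in_dif2[OF uD aD spne(1)] p_def r_def by auto
  have e1': "dif u' a \<inter> {p, r} = {p, r}"
    using sp_in_dif[OF u'D aD spne(2)] sp_in_dif2[OF u'D aD spne(2)] spu' r_def by auto
  have e2: "dif u' a \<inter> R2 = R2 - (dif u a \<inter> R2)"
    using flipS[OF aD] unfolding R2_def r_def by auto
  have e3: "dif u' a \<inter> R3 = dif u a \<inter> R3"
    using flipT[OF aD] unfolding R3_def r_def by auto
  have c2: "card {p, r} = 2" using rp by simp
  have fR2: "finite R2" using finS R2_def by auto
  show "card (dif u a) = 2 + card (dif u a \<inter> (S - {sp a})) + card (dif u a \<inter> (T - {sp a}))"
    using card_split3[OF fin_dif cov(1) dj] e1 c2 R2_def R3_def r_def by simp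
  show "card (dif u' a) = 2 + (card (S - {sp a}) - card (dif u a \<inter> (S - {sp a}))) + card (dif u a \<inter> (T - {sp a}))"
    using card_split3[OF fin_dif cov(2) dj] e1' e2 e3 c2 R2_def R3_def r_def fR2
    by (simp add: card_Diff_subset)
  show "card (dif u a \<inter> (S - {sp a})) \<le> card (S - {sp a})"
    using fR2 R2_def r_def by (simp add: card_mono)
qed

lemma ext_ne: "a \<in> D \<Longrightarrow> sp a \<noteq> p \<Longrightarrow> a \<noteq> u \<and> a \<noteq> u'"
  using spu' p_def by auto

lemma ext0:
  assumes aD: "a \<in> D" and r: "sp a \<noteq> p" and c3: "3 \<le> card (S - {sp a})"
  shows "dif u a \<inter> T \<subseteq> {sp a}"
    and "1 \<le> card (dif u a \<inter> (S - {sp a}))"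
    and "card (dif u a \<inter> (S - {sp a})) \<le> 2"
    and "card (S - {sp a}) \<le> card (dif u a \<inter> (S - {sp a})) + 2"
    and "card (dif u a \<inter> (S - {sp a})) + 1 \<le> card (S - {sp a})"
proof -
  have ne: "a \<noteq> u" "a \<noteq> u'" using ext_ne assms by auto
  have h1: "3 \<le> card (dif u a)" "card (dif u a) \<le> 4" using d34[OF uD aD] ne by fastforce+
  have h2: "3 \<le> card (dif u' a)" "card (dif u' a) \<le> 4" using d34[OF u'D aD] ne by fastforce+
  note e = ext[OF aD r]
  have b0: "card (dif u a \<inter> (T - {sp a})) = 0" using e h1 h2 c3 by linarith
  hence "dif u a \<inter> (T - {sp a}) = {}" using finT by simp
  thus "dif u a \<inter> T \<subseteq> {sp a}" by blast
  show "1 \<le> card (dif u a \<inter> (S - {sp a}))" using e h1 h2 c3 b0 by linarith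
  show "card (dif u a \<inter> (S - {sp a})) \<le> 2" using e h1 h2 c3 b0 by linarith
  show "card (S - {sp a}) \<le> card (dif u a \<inter> (S - {sp a})) + 2" using e h1 h2 c3 b0 by linarith
  show "card (dif u a \<inter> (S - {sp a})) + 1 \<le> card (S - {sp a})" using e h1 h2 c3 b0 by linarith
qed

lemma ycard:
  assumes aD: "a \<in> D" and r: "sp a = p"
  shows "card (dif u a) = card (dif u a \<inter> S) + card (dif u a \<inter> T)"
    and "card (dif u' a) = (card S - card (dif u a \<inter> S)) + card (dif u a \<inter> T)"
    and "dif u a \<subseteq> S \<union> T"
proof -
  have pn: "p \<notin> dif u a" using sp_notin[OF uD aD] r p_def by auto
  have pn': "p \<notin> dif u' a" using sp_notin[OF u'D aD] r spu' by auto
  have cov: "dif u a \<subseteq> S \<union> T" "dif u' a \<subseteq> S \<union> T"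
    using dif_lt cover pn pn' by blast+
  thus "dif u a \<subseteq> S \<union> T" by simp
  have e2: "dif u' a \<inter> S = S - (dif u a \<inter> S)" using flipS[OF aD] r pS by auto
  have e3: "dif u' a \<inter> T = dif u a \<inter> T" using flipT[OF aD] r inT by auto
  show "card (dif u a) = card (dif u a \<inter> S) + card (dif u a \<inter> T)"
    using card_split2[OF fin_dif cov(1) ST] .
  show "card (dif u' a) = (card S - card (dif u a \<inter> S)) + card (dif u a \<inter> T)"
    using card_split2[OF fin_dif cov(2) ST] e2 e3 finS by (simp add: card_Diff_subset)
qed

end

lemma card2_le: "card {x, y} \<le> 2" by (cases "x = y") auto

context pr begin

definition Wset where "Wset = {a\<in>D. sp a \<noteq> p \<and> sp a \<notin> S}"
definition Q where "Q a = dif u a \<inter> S"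

lemma W_basic: assumes "a \<in> Wset"
  shows "a \<in> D" "sp a \<noteq> p" "sp a \<notin> S" "sp a \<in> T" "dif u a \<inter> T \<subseteq> {sp a}"
    "1 \<le> card (Q a)" "card (Q a) \<le> 2" "card S \<le> card (Q a) + 2" "card (Q a) + 1 \<le> card S" "Q a \<subseteq> S"
proof -
  have aD: "a \<in> D" and r: "sp a \<noteq> p" "sp a \<notin> S" using assms unfolding Wset_def by auto
  have eq: "S - {sp a} = S" using r by auto
  have c3: "3 \<le> card (S - {sp a})" using cS unfolding eq by auto
  note e = ext0[OF aD r(1) c3]
  show "a \<in> D" by (rule aD)
  show "sp a \<noteq> p" "sp a \<notin> S" by (rule r(1), rule r(2))
  show "sp a \<in> T" unfolding inT using sp(1)[OF aD] r by simp
  show "dif u a \<inter> T \<subseteq> {sp a}" by (rule e(1))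
  show "1 \<le> card (Q a)" using e(2) unfolding eq Q_def .
  show "card (Q a) \<le> 2" using e(3) unfolding eq Q_def .
  show "card S \<le> card (Q a) + 2" using e(4) unfolding eq Q_def .
  show "card (Q a) + 1 \<le> card S" using e(5) unfolding eq Q_def .
  show "Q a \<subseteq> S" using Q_def by auto
qed

lemma W_difS: assumes "a \<in> Wset" "b \<in> Wset" "i \<in> S"
  shows "(i \<in> dif a b) = ((i \<in> Q a) \<noteq> (i \<in> Q b))"
proof -
  note wa = W_basic[OF assms(1)] and wb = W_basic[OF assms(2)]
  have "i < n" "i \<noteq> sp u" "i \<noteq> sp a" "i \<noteq> sp b" using assms(3) S_lt pS p_def wa(3) wb(3) by auto
  thus ?thesis using xor_dif[OF uD wa(1) wb(1)] assms(3) Q_def by auto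
qed

lemma W_difT: assumes "a \<in> Wset" "b \<in> Wset" "i \<in> T" "i \<noteq> sp a" "i \<noteq> sp b"
  shows "i \<notin> dif a b"
proof -
  note wa = W_basic[OF assms(1)] and wb = W_basic[OF assms(2)]
  have "i < n" "i \<noteq> sp u" using assms(3) inT p_def by auto
  moreover have "i \<notin> dif u a" "i \<notin> dif u b" using wa(5) wb(5) assms by auto
  ultimately show ?thesis using xor_dif[OF uD wa(1) wb(1)] assms(4,5) by auto
qed

lemma W_sub: assumes "a \<in> Wset" "b \<in> Wset" "Q a = Q b"
  shows "dif a b \<subseteq> {p, sp a, sp b}"
proof
  fix i assume i: "i \<in> dif a b"
  hence "i < n" using dif_lt by auto
  then consider "i = p" | "i \<in> S" | "i \<in> T" using cover by blast
  thus "i \<in> {p, sp a, sp b}"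
  proof cases
    case 2 thus ?thesis using W_difS[OF assms(1,2) 2] i assms(3) by auto
  next
    case 3 thus ?thesis using W_difT[OF assms(1,2) 3] i by auto
  qed auto
qed

lemma W1: assumes "a \<in> Wset" "b \<in> Wset" "a \<noteq> b" "Q a = Q b"
  shows "sp a \<noteq> sp b" "a ! p \<noteq> b ! p"
proof -
  note wa = W_basic[OF assms(1)] and wb = W_basic[OF assms(2)]
  note sub = W_sub[OF assms(1,2,4)]
  show ne: "sp a \<noteq> sp b"
  proof
    assume eq: "sp a = sp b"
    hence "sp a \<notin> dif a b" using sp_notin wa(1) wb(1) by auto
    hence "dif a b \<subseteq> {p}" using sub eq by auto
    hence "card (dif a b) \<le> 1" using card_mono[of "{p}"] by fastforce
    thus False using ge3[OF wa(1) wb(1)] assms(3) by auto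
  qed
  show "a ! p \<noteq> b ! p"
  proof
    assume eq: "a ! p = b ! p"
    hence "p \<notin> dif a b" using in_dif by auto
    hence "dif a b \<subseteq> {sp a, sp b}" using sub by auto
    hence "card (dif a b) \<le> card {sp a, sp b}" by (intro card_mono) auto
    also have "\<dots> \<le> 2" by (rule card2_le)
    finally have "card (dif a b) \<le> 2" .
    thus False using ge3[OF wa(1) wb(1)] assms(3) by auto
  qed
qed

lemma W2: assumes "a \<in> Wset" "b \<in> Wset" "Q b = S - Q a"
  shows "sp a = sp b"
proof (rule ccontr)
  assume ne: "sp a \<noteq> sp b"
  note wa = W_basic[OF assms(1)] and wb = W_basic[OF assms(2)]
  have "S \<subseteq> dif a b" using W_difS[OF assms(1,2)] assms(3) by auto
  moreover have "sp a \<in> dif a b" "sp b \<in> dif a b"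
    using sp_in_dif[OF wa(1) wb(1) ne] sp_in_dif2[OF wa(1) wb(1) ne] by auto
  ultimately have sub: "insert (sp a) (insert (sp b) S) \<subseteq> dif a b" by auto
  have "card (insert (sp a) (insert (sp b) S)) = card S + 2"
    using ne wa(3) wb(3) finS by simp
  hence "card S + 2 \<le> card (dif a b)" using card_mono[OF fin_dif sub] by simp
  thus False using le4[OF wa(1) wb(1)] cS by auto
qed

lemma tri: assumes "x \<in> Wset" "y \<in> Wset" "z \<in> Wset" "x \<noteq> y" "x \<noteq> z" "y \<noteq> z"
  "Q x = Q y" "Q z = Q x \<or> Q z = S - Q x" shows False
  using assms(8)
proof
  assume h: "Q z = Q x"
  have "x ! p \<noteq> y ! p" "x ! p \<noteq> z ! p" "y ! p \<noteq> z ! p"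
    using W1[OF assms(1,2,4,7)] W1[OF assms(1,3,5)] W1[OF assms(2,3,6)] h assms(7) by auto
  moreover have "p < n" "p \<noteq> sp x" "p \<noteq> sp y" "p \<noteq> sp z"
    using p_lt W_basic(2)[OF assms(1)] W_basic(2)[OF assms(2)] W_basic(2)[OF assms(3)] by auto
  ultimately show False using bit_eq[of x y z p] W_basic(1) assms(1-3) by blast
next
  assume h: "Q z = S - Q x"
  have "sp x = sp z" using W2[OF assms(1,3) h] .
  moreover have "sp y = sp z" using W2[OF assms(2,3)] h assms(7) by simp
  ultimately show False using W1[OF assms(1,2,4,7)] by simp
qed

definition N where "N s0 a = (if s0 \<in> Q a then Q a else S - Q a)"
definition R where "R s0 = {A. A \<subseteq> S \<and> s0 \<in> A \<and> A \<noteq> S \<and> (card S = 4 \<longrightarrow> card A = 2)}"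

lemma N_in_R: assumes "a \<in> Wset" "s0 \<in> S" shows "N s0 a \<in> R s0"
proof -
  note w = W_basic[OF assms(1)]
  have qne: "Q a \<noteq> {}" using w(6) by auto
  have qnS: "Q a \<noteq> S" using w(9) by auto
  have c4: "card S = 4 \<Longrightarrow> card (Q a) = 2" using w(7,8) by auto
  have c4': "card S = 4 \<Longrightarrow> card (S - Q a) = 2" using c4 w(10) finS by (simp add: card_Diff_subset finite_subset)
  show ?thesis
  proof (cases "s0 \<in> Q a")
    case True thus ?thesis using w(10) qnS c4 unfolding N_def R_def by auto
  next
    case False
    have "S - Q a \<noteq> S" using qne w(10) by auto
    thus ?thesis using False assms(2) c4' unfolding N_def R_def by auto
  qed
qed

lemma N_cases: assumes "a \<in> Wset" "N s0 a = A" shows "Q a = A \<or> Q a = S - A"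
proof -
  note w = W_basic[OF assms(1)]
  show ?thesis
  proof (cases "s0 \<in> Q a")
    case True thus ?thesis using assms(2) N_def by auto
  next
    case False
    hence "A = S - Q a" using assms(2) N_def by auto
    hence "S - A = Q a" using w(10) by auto
    thus ?thesis by simp
  qed
qed

lemma fiber: assumes "s0 \<in> S" "A \<in> R s0" shows "card {a\<in>Wset. N s0 a = A} \<le> 2"
proof (rule card_le2)
  show "{a\<in>Wset. N s0 a = A} \<subseteq> D" unfolding Wset_def by auto
  fix x y z assume x: "x \<in> {a\<in>Wset. N s0 a = A}" and y: "y \<in> {a\<in>Wset. N s0 a = A}"
    and z: "z \<in> {a\<in>Wset. N s0 a = A}" and d: "x \<noteq> y" "x \<noteq> z" "y \<noteq> z"
  have AS: "A \<subseteq> S" using assms(2) R_def by auto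
  have qx: "Q x = A \<or> Q x = S - A" using N_cases x by auto
  have qy: "Q y = A \<or> Q y = S - A" using N_cases y by auto
  have qz: "Q z = A \<or> Q z = S - A" using N_cases z by auto
  have SSA: "S - (S - A) = A" using AS by auto
  have xW: "x \<in> Wset" "y \<in> Wset" "z \<in> Wset" using x y z by auto
  have "Q x = Q y \<or> Q x = Q z \<or> Q y = Q z" using qx qy qz by auto
  moreover
  { assume h: "Q x = Q y"
    have "Q z = Q x \<or> Q z = S - Q x" using qx qz SSA by auto
    hence False using tri[OF xW(1,2,3) d h] by simp }
  moreover
  { assume h: "Q x = Q z"
    have "Q y = Q x \<or> Q y = S - Q x" using qx qy SSA by auto
    hence False using tri[OF xW(1,3,2) d(2,1) d(3)[symmetric] h] by simp }
  moreover
  { assume h: "Q y = Q z"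
    have "Q x = Q y \<or> Q x = S - Q y" using qx qy SSA by auto
    hence False using tri[OF xW(2,3,1) d(3) d(1)[symmetric] d(2)[symmetric] h] by simp }
  ultimately show False by blast
qed

lemma cardR: assumes "s0 \<in> S" shows "finite (R s0)" "card (R s0) \<le> 3"
proof -
  show fR: "finite (R s0)"
    by (rule finite_subset[of _ "Pow S"]) (use finS R_def in auto)
  define S' where "S' = S - {s0}"
  have cS': "card S' = card S - 1" using assms finS S'_def by simp
  have key: "\<And>A. A \<in> R s0 \<Longrightarrow> card A = 2 \<Longrightarrow> A \<in> (\<lambda>x. {s0, x}) ` S'"
  proof -
    fix A assume A: "A \<in> R s0" "card A = 2"
    have fA: "finite A" using A(2) card.infinite by fastforce
    have s0A: "s0 \<in> A" and AS: "A \<subseteq> S" using A R_def by auto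
    have "card (A - {s0}) = 1" using A(2) s0A fA by simp
    then obtain x where x: "A - {s0} = {x}" using card_1_singletonE by blast
    have "A = {s0, x}" using x s0A by auto
    moreover have "x \<in> S'" using x AS S'_def by auto
    ultimately show "A \<in> (\<lambda>x. {s0, x}) ` S'" by auto
  qed
  show "card (R s0) \<le> 3"
  proof (cases "card S = 4")
    case True
    hence "R s0 \<subseteq> (\<lambda>x. {s0, x}) ` S'" using key R_def by auto
    hence "card (R s0) \<le> card ((\<lambda>x. {s0, x}) ` S')" by (intro card_mono) (use finS S'_def in auto)
    also have "\<dots> \<le> card S'" by (rule card_image_le) (use finS S'_def in auto)
    finally show ?thesis using cS' True by simp
  next
    case False
    hence c3: "card S = 3" using cS by auto
    have "R s0 \<subseteq> insert {s0} ((\<lambda>x. {s0, x}) ` S')"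
    proof
      fix A assume A: "A \<in> R s0"
      have s0A: "s0 \<in> A" and AS: "A \<subseteq> S" and AnS: "A \<noteq> S" using A R_def by auto
      have fA: "finite A" using AS finS finite_subset by auto
      have "card A < card S" using AS AnS finS psubset_card_mono by auto
      moreover have "card A \<noteq> 0" using s0A fA by auto
      ultimately have "card A = 1 \<or> card A = 2" using c3 by auto
      thus "A \<in> insert {s0} ((\<lambda>x. {s0, x}) ` S')"
      proof
        assume "card A = 1"
        then obtain y where "A = {y}" using card_1_singletonE by blast
        thus ?thesis using s0A by auto
      next
        assume "card A = 2" thus ?thesis using key A by auto
      qed
    qed
    hence "card (R s0) \<le> card (insert {s0} ((\<lambda>x. {s0, x}) ` S'))"
      by (intro card_mono) (use finS S'_def in auto)
    also have "\<dots> \<le> Suc (card ((\<lambda>x. {s0, x}) ` S'))" by (rule card_insert_le_m1) simp_all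
    also have "\<dots> \<le> Suc (card S')" using card_image_le finS S'_def by auto
    finally show ?thesis using cS' c3 by simp
  qed
qed

lemma W6: "card Wset \<le> 6"
proof -
  obtain s0 where s0: "s0 \<in> S" using cS by fastforce
  have "Wset \<subseteq> (\<Union>A\<in>R s0. {a\<in>Wset. N s0 a = A})" using N_in_R[OF _ s0] by auto
  hence "card Wset \<le> card (\<Union>A\<in>R s0. {a\<in>Wset. N s0 a = A})"
    by (rule card_mono[rotated]) (use cardR(1)[OF s0] finD in \<open>auto simp: Wset_def\<close>)
  also have "\<dots> \<le> (\<Sum>A\<in>R s0. card {a\<in>Wset. N s0 a = A})" by (rule card_UN_le[OF cardR(1)[OF s0]])
  also have "\<dots> \<le> card (R s0) * 2" using sum_bounded_above[of "R s0" "\<lambda>A. card {a\<in>Wset. N s0 a = A}" 2] fiber[OF s0] by auto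
  also have "\<dots> \<le> 6" using cardR(2)[OF s0] by simp
  finally show ?thesis .
qed

end



context pr begin

lemma case2: assumes "\<forall>r. card (Cl r) \<le> 2" shows "card D \<le> 16"
proof -
  have sub: "D \<subseteq> Cl p \<union> (\<Union>r\<in>S. Cl r) \<union> Wset" unfolding Cl_def Wset_def by auto
  have fin: "finite (Cl p)" "finite (\<Union>r\<in>S. Cl r)" "finite Wset"
    using finD finS unfolding Cl_def Wset_def by auto
  have "card D \<le> card (Cl p \<union> (\<Union>r\<in>S. Cl r) \<union> Wset)" using sub fin by (intro card_mono) auto
  also have "\<dots> \<le> card (Cl p) + card (\<Union>r\<in>S. Cl r) + card Wset"
    using card_Un_le[of "Cl p \<union> (\<Union>r\<in>S. Cl r)" Wset] card_Un_le[of "Cl p" "\<Union>r\<in>S. Cl r"] by linarith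
  also have "card (\<Union>r\<in>S. Cl r) \<le> (\<Sum>r\<in>S. card (Cl r))" by (rule card_UN_le[OF finS])
  also have "\<dots> \<le> card S * 2" using sum_bounded_above[of S "\<lambda>r. card (Cl r)" 2] assms by auto
  finally have "card D \<le> card (Cl p) + card S * 2 + card Wset" by simp
  moreover have "card (Cl p) \<le> 2" using assms by blast
  ultimately show ?thesis using W6 cS by linarith
qed

end

context cfg begin

definition On where "On a = {i. i < n \<and> a ! i = One}"

lemma dif_On: assumes "a \<in> D" "b \<in> D" "sp a = sp b"
  shows "dif a b = (On a - On b) \<union> (On b - On a)"
proof (rule set_eqI)
  fix i
  show "(i \<in> dif a b) = (i \<in> (On a - On b) \<union> (On b - On a))"
  proof (cases "i < n \<and> i \<noteq> sp a")
    case True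
    hence "a ! i \<noteq> Star" "b ! i \<noteq> Star" using ns assms by auto
    thus ?thesis using True unfolding dif_def On_def by (cases "a ! i"; cases "b ! i") auto
  next
    case False
    thus ?thesis using sp(2)[OF assms(1)] sp(2)[OF assms(2)] assms(3) unfolding dif_def On_def by auto
  qed
qed

lemma pair4: assumes "3 \<le> card (Cl q)"
  shows "\<exists>a b. a \<in> Cl q \<and> b \<in> Cl q \<and> a \<noteq> b \<and> card (dif a b) = 4"
proof (rule ccontr)
  assume nc: "\<not> ?thesis"
  have fin: "finite (Cl q)" using finD unfolding Cl_def by auto
  obtain x y z where xyz: "x \<in> Cl q" "y \<in> Cl q" "z \<in> Cl q" "x \<noteq> y" "x \<noteq> z" "y \<noteq> z"
    using three_elems[OF fin assms] by blast
  have D: "x \<in> D" "y \<in> D" "z \<in> D" and s: "sp x = q" "sp y = q" "sp z = q" using xyz unfolding Cl_def by auto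
  have three: "card (dif x y) = 3" "card (dif x z) = 3" "card (dif y z) = 3"
    using d34[OF D(1,2)] d34[OF D(1,3)] d34[OF D(2,3)] nc xyz by blast+
  have fo: "finite (On a)" for a unfolding On_def by auto
  have e1: "card (dif x y) + 2 * card (On x \<inter> On y) = card (On x) + card (On y)"
    using dif_On[OF D(1,2)] s card_symdiff[OF fo fo] by simp
  have e2: "card (dif x z) + 2 * card (On x \<inter> On z) = card (On x) + card (On z)"
    using dif_On[OF D(1,3)] s card_symdiff[OF fo fo] by simp
  have e3: "card (dif y z) + 2 * card (On y \<inter> On z) = card (On y) + card (On z)"
    using dif_On[OF D(2,3)] s card_symdiff[OF fo fo] by simp
  show False using e1 e2 e3 three by presburger
qed

end


definition sd :: "'a set \<Rightarrow> 'a set \<Rightarrow> 'a set" where "sd A B = (A - B) \<union> (B - A)"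

lemma sd_card: "finite A \<Longrightarrow> finite B \<Longrightarrow> card (sd A B) + 2 * card (A \<inter> B) = card A + card B"
  unfolding sd_def by (rule card_symdiff)

lemma sd_empty: "sd A B = {} \<Longrightarrow> A = B" unfolding sd_def by auto

lemma sd_eq2: assumes "finite A" "finite B" "card A = card B" "card (sd A B) \<le> 1" shows "A = B"
proof -
  have "card (sd A B) + 2 * card (A \<inter> B) = card A + card B" using sd_card assms by blast
  hence "card (sd A B) = 0" using assms(3,4) by presburger
  moreover have "finite (sd A B)" using assms unfolding sd_def by auto
  ultimately show ?thesis using sd_empty by auto
qed

lemma sd_le: "finite A \<Longrightarrow> finite B \<Longrightarrow> card (sd A B) \<le> card A + card B"
  using sd_card by (metis le_add1)

locale pr4 = pr +
  assumes S4: "card S = 4"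
begin

definition Y where "Y = Cl p - {u, u'}"
definition M where "M a = dif u a \<inter> T"
definition Qx where "Qx a = dif u a \<inter> (S - {sp a})"

lemma X0: assumes "a \<in> D" "b \<in> D" "i < n" "i \<noteq> p" "i \<noteq> sp a" "i \<noteq> sp b"
  shows "(i \<in> dif a b) = ((i \<in> dif u a) \<noteq> (i \<in> dif u b))"
  using xor_dif[OF uD assms(1,2,3)] assms(4-6) p_def by auto

lemma E1: assumes "a \<in> D" "sp a \<noteq> p"
  shows "dif u a \<inter> T \<subseteq> {sp a}" "1 \<le> card (Qx a)" "card (Qx a) \<le> 2"
    "sp a \<notin> S \<Longrightarrow> card (Qx a) = 2" "Qx a \<subseteq> S - {sp a}" "finite (Qx a)"
proof -
  have c3: "3 \<le> card (S - {sp a})" using S4 finS by (cases "sp a \<in> S") auto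
  note e = ext0[OF assms c3]
  show "dif u a \<inter> T \<subseteq> {sp a}" "1 \<le> card (Qx a)" "card (Qx a) \<le> 2"
    using e(1-3) unfolding Qx_def by auto
  show "sp a \<notin> S \<Longrightarrow> card (Qx a) = 2"
  proof -
    assume "sp a \<notin> S"
    hence "card (S - {sp a}) = 4" using S4 by simp
    thus ?thesis using e(3,4) unfolding Qx_def by simp
  qed
  show "Qx a \<subseteq> S - {sp a}" unfolding Qx_def by auto
  show "finite (Qx a)" unfolding Qx_def using finS by auto
qed

lemma Tfree: assumes "a \<in> D" "sp a \<noteq> p" "i \<in> T" "i \<noteq> sp a" shows "i \<notin> dif u a"
  using E1(1)[OF assms(1,2)] assms(3,4) by auto

lemma Y1: assumes "y \<in> Y"
  shows "y \<in> D" "sp y = p" "y \<noteq> u" "y \<noteq> u'" "card (Q y) = 2" "1 \<le> card (M y)" "card (M y) \<le> 2"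
    "Q y \<subseteq> S" "M y \<subseteq> T" "finite (Q y)" "finite (M y)" "dif u y = Q y \<union> M y"
proof -
  show yD: "y \<in> D" and sy: "sp y = p" and ne: "y \<noteq> u" "y \<noteq> u'" using assms unfolding Y_def Cl_def by auto
  note c = ycard[OF yD sy]
  have h1: "3 \<le> card (dif u y)" "card (dif u y) \<le> 4" using d34[OF uD yD] ne by fastforce+
  have h2: "3 \<le> card (dif u' y)" "card (dif u' y) \<le> 4" using d34[OF u'D yD] ne by fastforce+
  have qS: "card (dif u y \<inter> S) \<le> 4" using S4 finS card_mono[of S "dif u y \<inter> S"] by auto
  show "card (Q y) = 2" "1 \<le> card (M y)" "card (M y) \<le> 2"
    using c(1,2) h1 h2 qS S4 unfolding Q_def M_def by linarith+
  show "Q y \<subseteq> S" "M y \<subseteq> T" unfolding Q_def M_def by auto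
  show "finite (Q y)" "finite (M y)" unfolding Q_def M_def using finS finT by auto
  show "dif u y = Q y \<union> M y" using c(3) unfolding Q_def M_def by auto
qed

lemma Yfree: assumes "y \<in> Y" "i \<in> T" shows "(i \<in> dif u y) = (i \<in> M y)"
  unfolding M_def using assms by auto

lemma YY: assumes "y \<in> Y" "y' \<in> Y"
  shows "card (dif y y') = card (sd (Q y) (Q y')) + card (sd (M y) (M y'))"
proof -
  note a = Y1[OF assms(1)] and b = Y1[OF assms(2)]
  have eq: "dif y y' = sd (Q y) (Q y') \<union> sd (M y) (M y')"
  proof (rule set_eqI)
    fix i
    show "(i \<in> dif y y') = (i \<in> sd (Q y) (Q y') \<union> sd (M y) (M y'))"
    proof (cases "i < n \<and> i \<noteq> p")
      case True
      hence x: "(i \<in> dif y y') = ((i \<in> dif u y) \<noteq> (i \<in> dif u y'))"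
        using X0[OF a(1) b(1)] a(2) b(2) by auto
      show ?thesis using x a(12) b(12) a(8,9) b(8,9) ST unfolding sd_def by blast
    next
      case False
      hence "i \<notin> dif y y'"
        using sp_notin[OF a(1) b(1)] a(2) b(2) dif_lt by auto
      moreover have "i \<notin> sd (Q y) (Q y') \<union> sd (M y) (M y')"
        using False a(8,9) b(8,9) S_lt pS inT unfolding sd_def by auto
      ultimately show ?thesis by simp
    qed
  qed
  have "sd (Q y) (Q y') \<inter> sd (M y) (M y') = {}" using a(8,9) b(8,9) ST unfolding sd_def by auto
  moreover have "finite (sd (Q y) (Q y'))" "finite (sd (M y) (M y'))"
    using a(10,11) b(10,11) unfolding sd_def by auto
  ultimately show ?thesis using eq by (simp add: card_Un_disjoint)
qed

lemma YE: assumes "y \<in> Y" "a \<in> D" "sp a \<noteq> p"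
  shows "2 + card (sd (Q y - {sp a}) (Qx a)) + card (M y - {sp a}) \<le> card (dif y a)"
proof -
  note yy = Y1[OF assms(1)] and ea = E1[OF assms(2,3)]
  define r where "r = sp a"
  have rn: "r < n" using sp assms r_def by auto
  have spne: "sp y \<noteq> sp a" using yy(2) assms(3) by simp
  have pr: "{p, r} \<subseteq> dif y a" using sp_in_dif[OF yy(1) assms(2) spne] sp_in_dif2[OF yy(1) assms(2) spne] yy(2) r_def by auto
  have s1: "sd (Q y - {r}) (Qx a) \<subseteq> dif y a"
  proof
    fix i assume i: "i \<in> sd (Q y - {r}) (Qx a)"
    hence iS: "i \<in> S" "i \<noteq> r" using yy(8) ea(5) r_def unfolding sd_def by auto
    have "i < n" "i \<noteq> p" using iS S_lt pS by auto
    hence x: "(i \<in> dif y a) = ((i \<in> dif u y) \<noteq> (i \<in> dif u a))"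
      using X0[OF yy(1) assms(2)] yy(2) iS(2) r_def by auto
    have "(i \<in> dif u y) = (i \<in> Q y - {r})" using iS unfolding Q_def by auto
    moreover have "(i \<in> dif u a) = (i \<in> Qx a)" using iS unfolding Qx_def r_def by auto
    ultimately show "i \<in> dif y a" using x i unfolding sd_def by auto
  qed
  have s2: "M y - {r} \<subseteq> dif y a"
  proof
    fix i assume i: "i \<in> M y - {r}"
    hence iT: "i \<in> T" "i \<noteq> r" using yy(9) by auto
    have "i < n" "i \<noteq> p" using iT inT by auto
    hence x: "(i \<in> dif y a) = ((i \<in> dif u y) \<noteq> (i \<in> dif u a))"
      using X0[OF yy(1) assms(2)] yy(2) iT(2) r_def by auto
    have "i \<notin> dif u a" using Tfree[OF assms(2,3) iT(1)] iT(2) r_def by auto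
    moreover have "i \<in> dif u y" using i unfolding M_def by auto
    ultimately show "i \<in> dif y a" using x by auto
  qed
  have dj: "{p, r} \<inter> sd (Q y - {r}) (Qx a) = {}" "{p, r} \<inter> (M y - {r}) = {}"
    "sd (Q y - {r}) (Qx a) \<inter> (M y - {r}) = {}"
    using yy(8,9) ea(5) pS ST inT r_def unfolding sd_def by auto
  have fins: "finite (sd (Q y - {r}) (Qx a))" "finite (M y - {r})"
    using yy(10,11) ea(6) unfolding sd_def by auto
  have rp: "r \<noteq> p" using assms(3) r_def by simp
  have "card ({p, r} \<union> sd (Q y - {r}) (Qx a) \<union> (M y - {r})) = 2 + card (sd (Q y - {r}) (Qx a)) + card (M y - {r})"
    using dj fins rp by (simp add: card_Un_disjoint Int_Un_distrib2)
  moreover have "card ({p, r} \<union> sd (Q y - {r}) (Qx a) \<union> (M y - {r})) \<le> card (dif y a)"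
    using pr s1 s2 by (intro card_mono[OF fin_dif]) auto
  ultimately show ?thesis using r_def by simp
qed

lemma EE: assumes "a \<in> D" "b \<in> D" "sp a \<noteq> p" "sp b \<noteq> p" "i \<in> dif a b" "i \<noteq> p" "i \<noteq> sp a" "i \<noteq> sp b"
  shows "i \<in> S" "(i \<in> dif u a) \<noteq> (i \<in> dif u b)"
proof -
  have n: "i < n" using assms(5) dif_lt by auto
  have x: "(i \<in> dif u a) \<noteq> (i \<in> dif u b)" using X0[OF assms(1,2) n assms(6-8)] assms(5) by simp
  thus "(i \<in> dif u a) \<noteq> (i \<in> dif u b)" .
  show "i \<in> S"
  proof (rule ccontr)
    assume "i \<notin> S"
    hence "i \<in> T" using n assms(6) inT by auto
    thus False using Tfree[OF assms(1,3)] Tfree[OF assms(2,4)] assms(7,8) x by auto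
  qed
qed

end

lemma two_elems: assumes "finite F" "2 \<le> card F" shows "\<exists>x y. x \<in> F \<and> y \<in> F \<and> x \<noteq> y"
proof -
  obtain x where x: "x \<in> F" using assms by fastforce
  have "1 \<le> card (F - {x})" using assms x by (simp add: card_Diff_singleton)
  hence "F - {x} \<noteq> {}" by (intro notI) simp
  then obtain y where y: "y \<in> F - {x}" by blast
  show ?thesis using x y by blast
qed

context pr4 begin

lemma finY: "finite Y" unfolding Y_def Cl_def using finD by auto

lemma IIa_Q: assumes y0: "y0 \<in> Y" "card (M y0) = 2" and a: "a \<in> D" "sp a \<noteq> p"
  shows "Qx a = Q y0 - {sp a}"
proof -
  note yy = Y1[OF y0(1)] and ea = E1[OF a]
  have h: "2 + card (sd (Q y0 - {sp a}) (Qx a)) + card (M y0 - {sp a}) \<le> 4"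
    using YE[OF y0(1) a] le4[OF yy(1) a(1)] by linarith
  have fsd: "finite (sd (Q y0 - {sp a}) (Qx a))" using yy(10) ea(6) unfolding sd_def by auto
  show ?thesis
  proof (cases "sp a \<in> M y0")
    case False
    hence "card (M y0 - {sp a}) = 2" using y0(2) by simp
    hence "card (sd (Q y0 - {sp a}) (Qx a)) = 0" using h by simp
    hence "sd (Q y0 - {sp a}) (Qx a) = {}" using fsd by simp
    thus ?thesis using sd_empty by metis
  next
    case True
    hence rT: "sp a \<in> T" using yy(9) by auto
    hence rS: "sp a \<notin> S" using ST by auto
    have "card (M y0 - {sp a}) = 1" using y0(2) True yy(11) by simp
    hence c1: "card (sd (Q y0 - {sp a}) (Qx a)) \<le> 1" using h by simp
    have q: "Q y0 - {sp a} = Q y0" using rS yy(8) by auto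
    have "card (Qx a) = 2" using ea(4) rS by simp
    hence "Q y0 = Qx a" using sd_eq2[of "Q y0" "Qx a"] c1 q yy(5,10) ea(6) by simp
    thus ?thesis using q by simp
  qed
qed

lemma IIa_bit: assumes y0: "y0 \<in> Y" "card (M y0) = 2" and a: "a \<in> D" "sp a \<noteq> p"
  and b: "b \<in> D" "sp b \<noteq> p" and ne: "a \<noteq> b" shows "a ! p \<noteq> b ! p"
proof -
  have qa: "Qx a = Q y0 - {sp a}" and qb: "Qx b = Q y0 - {sp b}" using IIa_Q y0 a b by auto
  have sub: "dif a b \<subseteq> {p, sp a, sp b}"
  proof
    fix i assume i: "i \<in> dif a b"
    show "i \<in> {p, sp a, sp b}"
    proof (rule ccontr)
      assume "i \<notin> {p, sp a, sp b}"
      hence ii: "i \<noteq> p" "i \<noteq> sp a" "i \<noteq> sp b" by auto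
      note e = EE[OF a(1) b(1) a(2) b(2) i ii]
      have "(i \<in> dif u a) = (i \<in> Q y0)" using qa e(1) ii unfolding Qx_def by auto
      moreover have "(i \<in> dif u b) = (i \<in> Q y0)" using qb e(1) ii unfolding Qx_def by auto
      ultimately show False using e(2) by simp
    qed
  qed
  show ?thesis
  proof
    assume eq: "a ! p = b ! p"
    hence "p \<notin> dif a b" using in_dif by auto
    hence sub2: "dif a b \<subseteq> {sp a, sp b}" using sub by auto
    show False
    proof (cases "sp a = sp b")
      case True
      hence "sp a \<notin> dif a b" using sp_notin a b by auto
      hence "dif a b = {}" using sub2 True by auto
      thus False using ge3[OF a(1) b(1)] ne by simp
    next
      case False
      have "card (dif a b) \<le> card {sp a, sp b}" using sub2 by (intro card_mono) auto
      also have "\<dots> \<le> 2" by (rule card2_le)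
      finally show False using ge3[OF a(1) b(1)] ne by simp
    qed
  qed
qed

lemma IIa_E: assumes y0: "y0 \<in> Y" "card (M y0) = 2" shows "card {a\<in>D. sp a \<noteq> p} \<le> 2"
proof (rule card_le2)
  show "{a\<in>D. sp a \<noteq> p} \<subseteq> D" by auto
  fix x y z assume x: "x \<in> {a\<in>D. sp a \<noteq> p}" and y: "y \<in> {a\<in>D. sp a \<noteq> p}"
    and z: "z \<in> {a\<in>D. sp a \<noteq> p}" and d: "x \<noteq> y" "x \<noteq> z" "y \<noteq> z"
  have b1: "x ! p \<noteq> y ! p" using IIa_bit[OF y0] x y d by auto
  have b2: "x ! p \<noteq> z ! p" using IIa_bit[OF y0] x z d by auto
  have b3: "y ! p \<noteq> z ! p" using IIa_bit[OF y0] y z d by auto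
  have "p < n" using p_lt .
  thus False using bit_eq[of x y z p] b1 b2 b3 x y z by auto
qed

lemma g1: assumes "y \<in> Y" "y' \<in> Y" "y \<noteq> y'" "Q y = Q y'"
  shows "M y \<inter> M y' = {}" "3 \<le> card (M y) + card (M y')"
proof -
  note a = Y1[OF assms(1)] and b = Y1[OF assms(2)]
  have "card (dif y y') = card (sd (M y) (M y'))" using YY[OF assms(1,2)] assms(4) unfolding sd_def by simp
  hence c: "3 \<le> card (sd (M y) (M y'))" using d34[OF a(1) b(1) assms(3)] by auto
  have e: "card (sd (M y) (M y')) + 2 * card (M y \<inter> M y') = card (M y) + card (M y')"
    using sd_card a(11) b(11) by blast
  hence "card (M y \<inter> M y') = 0" using c a(7) b(7) by linarith
  thus "M y \<inter> M y' = {}" using a(11) by simp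
  show "3 \<le> card (M y) + card (M y')" using c e by linarith
qed

lemma inj_one: assumes "y \<in> Y" "y' \<in> Y" "card (M y) = 1" "card (M y') = 1" "Q y = Q y'"
  shows "y = y'"
proof -
  note a = Y1[OF assms(1)] and b = Y1[OF assms(2)]
  have "card (dif y y') = card (sd (M y) (M y'))" using YY[OF assms(1,2)] assms(5) unfolding sd_def by simp
  also have "\<dots> \<le> 2" using sd_le[OF a(11) b(11)] assms(3,4) by simp
  finally show ?thesis using ge3 a(1) b(1) by simp
qed

lemma two_sets: assumes "A \<subseteq> S" "B \<subseteq> S" "card A = 2" "card B = 2" "B \<noteq> A" "B \<noteq> S - A"
  shows "card (sd B A) = 2"
proof -
  have fA: "finite A" "finite B" using assms(1,2) finS finite_subset by auto
  have le: "card (B \<inter> A) \<le> 2" using card_mono[OF fA(2), of "B \<inter> A"] assms(4) by auto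
  have n2: "card (B \<inter> A) \<noteq> 2"
  proof
    assume h: "card (B \<inter> A) = 2"
    have "B \<inter> A = B" using card_subset_eq[OF fA(2), of "B \<inter> A"] h assms(4) by auto
    moreover have "B \<inter> A = A" using card_subset_eq[OF fA(1), of "B \<inter> A"] h assms(3) by auto
    ultimately show False using assms(5) by simp
  qed
  have n0: "card (B \<inter> A) \<noteq> 0"
  proof
    assume h: "card (B \<inter> A) = 0"
    hence "B \<inter> A = {}" using fA by simp
    hence sub: "B \<subseteq> S - A" using assms(2) by auto
    have "card (S - A) = 2" using assms(1,3) S4 finS fA by (simp add: card_Diff_subset)
    hence "B = S - A" using card_subset_eq[OF _ sub] finS assms(4) by auto
    thus False using assms(6) by simp
  qed
  have "card (sd B A) + 2 * card (B \<inter> A) = card B + card A" using sd_card fA by blast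
  thus ?thesis using le n2 n0 assms(3,4) by linarith
qed

definition PP where "PP = {A. A \<subseteq> S \<and> card A = 2}"

lemma PP: "finite PP" "card PP = 6"
proof -
  show "finite PP" unfolding PP_def by (rule finite_subset[of _ "Pow S"]) (use finS in auto)
  have "card PP = card S choose 2" unfolding PP_def by (rule n_subsets[OF finS])
  thus "card PP = 6" using S4 by (simp add: numeral_eq_Suc)
qed

lemma QPP: "y \<in> Y \<Longrightarrow> Q y \<in> PP" using Y1 unfolding PP_def by auto

lemma compl_PP: "A \<in> PP \<Longrightarrow> S - A \<in> PP \<and> S - A \<noteq> A"
proof -
  assume A: "A \<in> PP"
  hence "A \<subseteq> S" "card A = 2" unfolding PP_def by auto
  moreover hence "finite A" using finS finite_subset by auto
  ultimately have "card (S - A) = 2" using S4 finS by (simp add: card_Diff_subset)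
  moreover have "A \<noteq> {}" using \<open>card A = 2\<close> by auto
  ultimately show ?thesis using \<open>A \<subseteq> S\<close> unfolding PP_def by auto
qed

end

context pr4 begin

definition G where "G A = {y\<in>Y. Q y = A}"

lemma g_other: assumes y123: "y1 \<in> G A" "y2 \<in> G A" "y3 \<in> G A" "y1 \<noteq> y2" "y1 \<noteq> y3" "y2 \<noteq> y3"
  and A: "A \<in> PP" and y': "y' \<in> Y" "Q y' \<noteq> A"
  shows "card (M y') = 1" "Q y' \<noteq> S - A"
proof -
  have yY: "y1 \<in> Y" "y2 \<in> Y" "y3 \<in> Y" and qa: "Q y1 = A" "Q y2 = A" "Q y3 = A" using y123 unfolding G_def by auto
  note b = Y1[OF y'(1)]
  have dis: "M y1 \<inter> M y2 = {}" "M y1 \<inter> M y3 = {}" "M y2 \<inter> M y3 = {}"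
    using g1(1)[OF yY(1,2) y123(4)] g1(1)[OF yY(1,3) y123(5)] g1(1)[OF yY(2,3) y123(6)] qa by auto
  have AS: "A \<subseteq> S" "card A = 2" using A unfolding PP_def by auto
  show nc: "Q y' \<noteq> S - A"
  proof
    assume h: "Q y' = S - A"
    have "sd (Q y') A = S" using h AS unfolding sd_def by auto
    have m: "M y' = M yj" if j: "yj \<in> {y1, y2}" for yj
    proof -
      have yj: "yj \<in> Y" "Q yj = A" using j yY qa by auto
      have "card (dif y' yj) = 4 + card (sd (M y') (M yj))"
        using YY[OF y'(1) yj(1)] \<open>sd (Q y') A = S\<close> yj(2) S4 by simp
      hence "card (sd (M y') (M yj)) = 0" using le4[OF b(1)] Y1(1)[OF yj(1)] by fastforce
      moreover have "finite (sd (M y') (M yj))" using b(11) Y1(11)[OF yj(1)] unfolding sd_def by auto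
      ultimately show ?thesis using sd_empty by fastforce
    qed
    have "M y1 = M y2" using m[of y1] m[of y2] by simp
    moreover have "M y1 \<noteq> {}" using Y1(6)[OF yY(1)] by auto
    ultimately show False using dis(1) by simp
  qed
  have two: "card (sd (Q y') A) = 2" using two_sets[OF AS(1) b(8) AS(2) b(5) y'(2) nc] .
  have small: "card (sd (M y') (M yj)) \<le> 2" if j: "yj \<in> {y1, y2, y3}" for yj
  proof -
    have yj: "yj \<in> Y" "Q yj = A" using j yY qa by auto
    have "card (dif y' yj) = 2 + card (sd (M y') (M yj))" using YY[OF y'(1) yj(1)] two yj(2) by simp
    thus ?thesis using le4[OF b(1)] Y1(1)[OF yj(1)] by fastforce
  qed
  have "\<exists>yj\<in>{y1,y2,y3}. M y' \<inter> M yj = {}"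
  proof (rule ccontr)
    assume "\<not> ?thesis"
    then obtain e1 e2 e3 where e: "e1 \<in> M y' \<inter> M y1" "e2 \<in> M y' \<inter> M y2" "e3 \<in> M y' \<inter> M y3" by blast
    have "e1 \<noteq> e2" "e1 \<noteq> e3" "e2 \<noteq> e3" using e dis by blast+
    hence "card {e1, e2, e3} = 3" by simp
    moreover have "{e1, e2, e3} \<subseteq> M y'" using e by auto
    ultimately have "3 \<le> card (M y')" using card_mono[OF b(11)] by metis
    thus False using b(7) by simp
  qed
  then obtain yj where yj: "yj \<in> {y1,y2,y3}" "M y' \<inter> M yj = {}" by blast
  have yjY: "yj \<in> Y" using yj yY by auto
  have "card (sd (M y') (M yj)) = card (M y') + card (M yj)"
    using sd_card[OF b(11) Y1(11)[OF yjY]] yj(2) by simp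
  thus "card (M y') = 1" using small[OF yj(1)] b(6) Y1(6)[OF yjY] by linarith
qed

lemma Ybound: assumes T7: "11 \<le> card T" shows "card Y \<le> card T + 1"
proof (cases "\<forall>A\<in>PP. card (G A) \<le> 2")
  case True
  have "Y \<subseteq> (\<Union>A\<in>PP. G A)" using QPP unfolding G_def by auto
  hence "card Y \<le> card (\<Union>A\<in>PP. G A)" by (rule card_mono[rotated]) (use PP(1) finY in \<open>auto simp: G_def\<close>)
  also have "\<dots> \<le> (\<Sum>A\<in>PP. card (G A))" by (rule card_UN_le[OF PP(1)])
  also have "\<dots> \<le> card PP * 2" using sum_bounded_above[of PP "\<lambda>A. card (G A)" 2] True by auto
  finally show ?thesis using PP(2) T7 by simp
next
  case False
  then obtain A where A: "A \<in> PP" "3 \<le> card (G A)" by (auto simp: not_le)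
  have finG: "finite (G A)" using finY unfolding G_def by auto
  obtain y1 y2 y3 where y123: "y1 \<in> G A" "y2 \<in> G A" "y3 \<in> G A" "y1 \<noteq> y2" "y1 \<noteq> y3" "y2 \<noteq> y3"
    using three_elems[OF finG A(2)] by blast
  have GY: "G A \<subseteq> Y" unfolding G_def by auto
  define G1 where "G1 = {y\<in>G A. card (M y) = 1}"
  have G1s: "G1 \<subseteq> G A" unfolding G1_def by auto
  have cG1: "card G1 \<le> 1"
  proof (rule ccontr)
    assume "\<not> card G1 \<le> 1"
    hence "2 \<le> card G1" by simp
    then obtain x y where xy: "x \<in> G1" "y \<in> G1" "x \<noteq> y" using two_elems finG G1s finite_subset by metis
    have "x \<in> Y" "y \<in> Y" "Q x = Q y" "card (M x) = 1" "card (M y) = 1" using xy unfolding G1_def G_def by auto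
    thus False using g1(2)[of x y] xy(3) by simp
  qed
  have dis: "\<forall>i\<in>G A. \<forall>j\<in>G A. i \<noteq> j \<longrightarrow> M i \<inter> M j = {}"
    using g1(1) unfolding G_def by auto
  have fM: "\<forall>i\<in>G A. finite (M i)" using Y1(11) GY by auto
  have "(\<Sum>y\<in>G A. card (M y)) = card (\<Union>y\<in>G A. M y)"
    using card_UN_disjoint[OF finG fM dis] by simp
  also have "\<dots> \<le> card T" using Y1(9) GY finT by (intro card_mono) auto
  finally have s1: "(\<Sum>y\<in>G A. card (M y)) \<le> card T" .
  have fG1: "finite G1" using finG G1s finite_subset by auto
  have "(\<Sum>y\<in>G A. card (M y)) = (\<Sum>y\<in>G A - G1. card (M y)) + (\<Sum>y\<in>G1. card (M y))"
    using sum.subset_diff[OF G1s finG] by simp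
  moreover have "(\<Sum>y\<in>G A - G1. card (M y)) \<ge> (\<Sum>y\<in>G A - G1. 2)"
  proof (rule sum_mono)
    fix y assume "y \<in> G A - G1"
    hence "y \<in> Y" "card (M y) \<noteq> 1" unfolding G1_def G_def by auto
    thus "2 \<le> card (M y)" using Y1(6,7) by fastforce
  qed
  moreover have "(\<Sum>y\<in>G1. card (M y)) = card G1" unfolding G1_def by simp
  moreover have "card (G A - G1) = card (G A) - card G1" using card_Diff_subset[OF fG1 G1s] .
  moreover have "card G1 \<le> card (G A)" using card_mono[OF finG G1s] .
  ultimately have "2 * card (G A) - card G1 \<le> (\<Sum>y\<in>G A. card (M y))" by simp
  hence p1: "2 * card (G A) \<le> card T + 1" using s1 cG1 by linarith
  have oth: "card (M y') = 1 \<and> Q y' \<in> PP - {A, S - A}" if y': "y' \<in> Y - G A" for y'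
  proof -
    have yy: "y' \<in> Y" "Q y' \<noteq> A" using y' unfolding G_def by auto
    note go = g_other[OF y123 A(1) yy]
    show ?thesis using go QPP[OF yy(1)] yy(2) by auto
  qed
  have inj: "inj_on Q (Y - G A)"
    by (rule inj_onI) (use inj_one oth in blast)
  have "card (Y - G A) = card (Q ` (Y - G A))" using card_image[OF inj] by simp
  also have "\<dots> \<le> card (PP - {A, S - A})" using oth PP(1) by (intro card_mono) auto
  also have "\<dots> = 4"
  proof -
    have "A \<in> PP" "S - A \<in> PP" "S - A \<noteq> A" using A(1) compl_PP by auto
    hence "card (PP - {A, S - A}) = card PP - 2" using PP(1) by (simp add: card_Diff_subset)
    thus ?thesis using PP(2) by simp
  qed
  finally have p2: "card (Y - G A) \<le> 4" .
  have "card Y = card (G A) + card (Y - G A)"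
    using card_Diff_subset[OF finG GY] card_mono[OF finY GY] by simp
  thus ?thesis using p1 p2 T7 by linarith
qed

end

lemma card_ind: "finite K \<Longrightarrow> Z \<subseteq> K \<Longrightarrow> card Z = (\<Sum>i\<in>K. if i \<in> Z then 1 else 0)"
proof -
  assume f: "finite K" and s: "Z \<subseteq> K"
  have "(\<Sum>i\<in>K. if i \<in> Z then 1 else 0) = (\<Sum>i\<in>K \<inter> Z. (1::nat))" using sum.inter_restrict[OF f, of "\<lambda>_. 1::nat" Z] by simp
  also have "K \<inter> Z = Z" using s by auto
  finally show ?thesis by simp
qed

lemma sym3: "x \<noteq> Star \<Longrightarrow> y \<noteq> Star \<Longrightarrow> z \<noteq> Star \<Longrightarrow>
  (if x \<noteq> y then 1 else 0) + (if x \<noteq> z then 1 else 0) + (if y \<noteq> z then 1 else (0::nat)) \<le> 2"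
  by (cases x; cases y; cases z) auto

context cfg begin

lemma three_sum: assumes D3: "a \<in> D" "b \<in> D" "c \<in> D" and fK: "finite K"
  and Kok: "\<And>i. i \<in> K \<Longrightarrow> i < n \<and> i \<noteq> sp a \<and> i \<noteq> sp b \<and> i \<noteq> sp c"
  and s: "dif a b \<subseteq> K" "dif a c \<subseteq> K" "dif b c \<subseteq> K"
  shows "card (dif a b) + card (dif a c) + card (dif b c) \<le> 2 * card K"
proof -
  have "card (dif a b) + card (dif a c) + card (dif b c) =
    (\<Sum>i\<in>K. (if i \<in> dif a b then 1 else 0) + (if i \<in> dif a c then 1 else 0) + (if i \<in> dif b c then 1 else 0))"
    using card_ind[OF fK s(1)] card_ind[OF fK s(2)] card_ind[OF fK s(3)] by (simp add: sum.distrib)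
  also have "\<dots> \<le> (\<Sum>i\<in>K. 2)"
  proof (rule sum_mono)
    fix i assume i: "i \<in> K"
    note k = Kok[OF i]
    have ns3: "a ! i \<noteq> Star" "b ! i \<noteq> Star" "c ! i \<noteq> Star" using ns D3 k by auto
    show "(if i \<in> dif a b then 1 else 0) + (if i \<in> dif a c then 1 else 0) + (if i \<in> dif b c then 1 else 0) \<le> (2::nat)"
      using sym3[OF ns3] k unfolding dif_def by simp
  qed
  finally show ?thesis by simp
qed

end

context pr4 begin

lemma b1: assumes "\<forall>y\<in>Y. card (M y) = 1" shows "card Y \<le> 6"
proof -
  have inj: "inj_on Q Y" by (rule inj_onI) (use inj_one assms in blast)
  have "card Y = card (Q ` Y)" using card_image[OF inj] by simp
  also have "\<dots> \<le> card PP" using QPP PP(1) by (intro card_mono) auto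
  finally show ?thesis using PP(2) by simp
qed

lemma same_star: assumes "x \<in> Cl s" "x' \<in> Cl s" "s \<in> S"
  shows "dif x x' \<subseteq> insert p {i \<in> S - {s}. (i \<in> dif u x) \<noteq> (i \<in> dif u x')}"
proof
  fix i assume i: "i \<in> dif x x'"
  have xD: "x \<in> D" "x' \<in> D" "sp x = s" "sp x' = s" using assms(1,2) unfolding Cl_def by auto
  have sp: "sp x \<noteq> p" "sp x' \<noteq> p" using xD assms(3) pS by auto
  have "i \<noteq> s" using sp_notin[OF xD(1,2)] xD(3,4) i by auto
  show "i \<in> insert p {i \<in> S - {s}. (i \<in> dif u x) \<noteq> (i \<in> dif u x')}"
  proof (cases "i = p")
    case False
    note e = EE[OF xD(1,2) sp i False] 
    show ?thesis using e \<open>i \<noteq> s\<close> xD by auto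
  qed simp
qed

lemma star2: assumes r: "r \<in> S" shows "card (Cl r) \<le> 2"
proof (rule card_le2)
  show "Cl r \<subseteq> D" unfolding Cl_def by auto
  fix x y z assume xyz: "x \<in> Cl r" "y \<in> Cl r" "z \<in> Cl r" and d: "x \<noteq> y" "x \<noteq> z" "y \<noteq> z"
  have D3: "x \<in> D" "y \<in> D" "z \<in> D" and s3: "sp x = r" "sp y = r" "sp z = r" using xyz unfolding Cl_def by auto
  define K where "K = insert p (S - {r})"
  have fK: "finite K" using finS K_def by auto
  have cK: "card K = 4" using finS r pS S4 K_def by simp
  have Kok: "\<And>i. i \<in> K \<Longrightarrow> i < n \<and> i \<noteq> sp x \<and> i \<noteq> sp y \<and> i \<noteq> sp z"
    using s3 p_lt S_lt r pS K_def by auto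
  have sub: "dif x y \<subseteq> K" "dif x z \<subseteq> K" "dif y z \<subseteq> K"
    using same_star[OF xyz(1,2) r] same_star[OF xyz(1,3) r] same_star[OF xyz(2,3) r] K_def by auto
  have "card (dif x y) + card (dif x z) + card (dif y z) \<le> 8"
    using three_sum[OF D3 fK Kok sub] cK by simp
  moreover have "3 \<le> card (dif x y)" "3 \<le> card (dif x z)" "3 \<le> card (dif y z)"
    using d34[OF D3(1,2) d(1)] d34[OF D3(1,3) d(2)] d34[OF D3(2,3) d(3)] by auto
  ultimately show False by linarith
qed

end

context cfg begin
lemma sub2: assumes "a \<in> D" "b \<in> D" "dif a b \<subseteq> {x, y}" shows "a = b"
proof -
  have "card (dif a b) \<le> card {x, y}" using assms(3) by (intro card_mono) auto
  also have "\<dots> \<le> 2" by (rule card2_le)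
  finally show ?thesis using ge3 assms by simp
qed
end

context pr4 begin

lemma wfact: assumes y0: "y0 \<in> Y" "card (M y0) = 1" and s: "s \<in> S" and w: "w \<in> Cl s"
  shows "card (sd (Q y0 - {s}) (Qx w)) \<le> 1"
proof -
  have wD: "w \<in> D" "sp w = s" using w unfolding Cl_def by auto
  have wp: "sp w \<noteq> p" using wD s pS by auto
  note yy = Y1[OF y0(1)]
  obtain t0 where t0: "M y0 = {t0}" using y0(2) card_1_singletonE by blast
  have "t0 \<in> T" using t0 yy(9) by auto
  hence "t0 \<noteq> s" using s ST by auto
  hence "card (M y0 - {sp w}) = 1" using t0 wD by simp
  thus ?thesis using YE[OF y0(1) wD(1) wp] le4[OF yy(1) wD(1)] unfolding wD(2) by linarith
qed

lemma cross_core: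
  assumes dist: "r \<noteq> a" "r \<noteq> r'" "r \<noteq> b" "a \<noteq> r'" "a \<noteq> b" "r' \<noteq> b"
    and inS: "r \<in> S" "a \<in> S" "r' \<in> S" "b \<in> S" and Seq: "S = {r, a, r', b}"
    and W: "W1 \<in> Cl r" "W2 \<in> Cl r" and V: "V1 \<in> Cl r'" "V2 \<in> Cl r'"
    and hW1: "a \<in> dif u W1" "r' \<in> dif u W1" "b \<notin> dif u W1"
    and hW2: "a \<in> dif u W2" "b \<in> dif u W2" "r' \<notin> dif u W2"
    and hV1: "r \<in> dif u V1" "a \<notin> dif u V1" "b \<notin> dif u V1"
    and hV2: "a \<in> dif u V2" "r \<notin> dif u V2" "b \<notin> dif u V2"
    and bits: "W1 ! p \<noteq> W2 ! p" "V1 ! p \<noteq> V2 ! p"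
  shows False
proof -
  have WD: "W1 \<in> D" "W2 \<in> D" "sp W1 = r" "sp W2 = r" using W unfolding Cl_def by auto
  have VD: "V1 \<in> D" "V2 \<in> D" "sp V1 = r'" "sp V2 = r'" using V unfolding Cl_def by auto
  have rp: "r \<noteq> p" "r' \<noteq> p" "a \<noteq> p" "b \<noteq> p" using inS pS by auto
  have an: "a < n" "b < n" using inS S_lt by auto
  have b1: "W1 ! p \<noteq> V2 ! p"
  proof
    assume eq: "W1 ! p = V2 ! p"
    have "dif W1 V2 \<subseteq> {r, r'}"
    proof
      fix i assume i: "i \<in> dif W1 V2"
      show "i \<in> {r, r'}"
      proof (rule ccontr)
        assume ni: "i \<notin> {r, r'}"
        have "i \<noteq> p" using i eq in_dif by auto
        note e = EE[OF WD(1) VD(2) _ _ i this] 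
        have "i \<in> S" "(i \<in> dif u W1) \<noteq> (i \<in> dif u V2)" using e WD VD rp ni by auto
        thus False using Seq ni hW1 hV2 by auto
      qed
    qed
    hence "W1 = V2" using sub2 WD VD by blast
    thus False using WD VD dist by auto
  qed
  have b2: "W2 ! p = V1 ! p"
  proof (rule ccontr)
    assume ne: "W2 ! p \<noteq> V1 ! p"
    have spne: "sp W2 \<noteq> sp V1" using WD VD dist by auto
    have "p \<in> dif W2 V1" using ne p_lt in_dif by auto
    moreover have "r \<in> dif W2 V1" "r' \<in> dif W2 V1"
      using sp_in_dif[OF WD(2) VD(1) spne] sp_in_dif2[OF WD(2) VD(1) spne] WD VD by auto
    moreover have "a \<in> dif W2 V1" using X0[OF WD(2) VD(1) an(1) rp(3)] WD VD dist hW2 hV1 by auto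
    moreover have "b \<in> dif W2 V1" using X0[OF WD(2) VD(1) an(2) rp(4)] WD VD dist hW2 hV1 by auto
    ultimately have sub: "{p, r, r', a, b} \<subseteq> dif W2 V1" by auto
    have "card {p, r, r', a, b} = 5" using dist rp by auto
    hence "5 \<le> card (dif W2 V1)" using card_mono[OF fin_dif sub] by simp
    thus False using le4[OF WD(2) VD(1)] by simp
  qed
  have "W1 ! p = V1 ! p" using bit_eq[of V2 W1 V1 p] b1 bits(2) VD WD p_lt rp by auto
  thus False using b2 bits(1) by simp
qed

end

context pr4 begin

lemma cross: assumes y0: "y0 \<in> Y" "card (M y0) = 1" and r: "r \<in> Q y0" and r': "r' \<in> S - Q y0"
  and c: "2 \<le> card (Cl r)" "2 \<le> card (Cl r')" shows False
proof -
  note yy = Y1[OF y0(1)]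
  have "card (Q y0 - {r}) = 1" using yy(5) r by simp
  then obtain a where a: "Q y0 - {r} = {a}" using card_1_singletonE by blast
  have cS2: "card (S - Q y0) = 2" using yy(5,8,10) S4 finS by (simp add: card_Diff_subset)
  have "card (S - Q y0 - {r'}) = 1" using cS2 r' by simp
  then obtain b where b: "S - Q y0 - {r'} = {b}" using card_1_singletonE by blast
  have Qy: "Q y0 = {r, a}" using a r by auto
  have SQ: "S - Q y0 = {r', b}" using b r' by auto
  have dist: "r \<noteq> a" "r \<noteq> r'" "r \<noteq> b" "a \<noteq> r'" "a \<noteq> b" "r' \<noteq> b" using a b r r' by auto
  have inS: "r \<in> S" "a \<in> S" "r' \<in> S" "b \<in> S" using Qy SQ yy(8) by auto
  have Seq: "S = {r, a, r', b}" using Qy SQ yy(8) by auto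
  have finCl: "finite (Cl s)" for s using finD unfolding Cl_def by auto
  obtain w1 w2 where w: "w1 \<in> Cl r" "w2 \<in> Cl r" "w1 \<noteq> w2" using two_elems[OF finCl c(1)] by blast
  obtain v1 v2 where v: "v1 \<in> Cl r'" "v2 \<in> Cl r'" "v1 \<noteq> v2" using two_elems[OF finCl c(2)] by blast
  have rp: "r \<noteq> p" "r' \<noteq> p" using inS pS by auto
  have wf: "a \<in> dif u w \<and> \<not> (r' \<in> dif u w \<and> b \<in> dif u w)" if w: "w \<in> Cl r" for w
  proof -
    have wD: "w \<in> D" "sp w = r" using w unfolding Cl_def by auto
    note ew = E1[OF wD(1)] 
    have e: "1 \<le> card (Qx w)" "card (Qx w) \<le> 2" "finite (Qx w)" using ew wD rp by auto
    have sdw: "card (sd {a} (Qx w)) \<le> 1" using wfact[OF y0 inS(1) w] a by simp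
    have qx: "Qx w = dif u w \<inter> {a, r', b}" using Seq dist wD unfolding Qx_def by auto
    have A: "a \<in> dif u w"
    proof (rule ccontr)
      assume "a \<notin> dif u w"
      hence "a \<notin> Qx w" using qx by auto
      hence "sd {a} (Qx w) = insert a (Qx w)" unfolding sd_def by auto
      hence "card (sd {a} (Qx w)) = Suc (card (Qx w))" using e(3) \<open>a \<notin> Qx w\<close> by simp
      thus False using sdw e(1) by simp
    qed
    have B: "\<not> (r' \<in> dif u w \<and> b \<in> dif u w)"
    proof
      assume h: "r' \<in> dif u w \<and> b \<in> dif u w"
      hence "{a, r', b} \<subseteq> Qx w" using qx A by auto
      hence "card {a, r', b} \<le> card (Qx w)" using card_mono[OF e(3)] by blast
      thus False using e(2) dist by simp
    qed
    show ?thesis using A B by simp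
  qed
  have vf: "b \<notin> dif u v \<and> (r \<in> dif u v \<or> a \<in> dif u v)" if v: "v \<in> Cl r'" for v
  proof -
    have vD: "v \<in> D" "sp v = r'" using v unfolding Cl_def by auto
    note ev = E1[OF vD(1)]
    have e: "1 \<le> card (Qx v)" "card (Qx v) \<le> 2" "finite (Qx v)" using ev vD rp by auto
    have q0: "Q y0 - {r'} = {r, a}" using Qy dist by auto
    have sdv: "card (sd {r, a} (Qx v)) \<le> 1" using wfact[OF y0 inS(3) v] q0 by simp
    have qx: "Qx v = dif u v \<inter> {r, a, b}" using Seq dist vD unfolding Qx_def by auto
    have B: "b \<notin> dif u v"
    proof
      assume bv: "b \<in> dif u v"
      hence bq: "b \<in> Qx v" using qx by auto
      have "\<not> (r \<in> Qx v \<and> a \<in> Qx v)"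
      proof
        assume "r \<in> Qx v \<and> a \<in> Qx v"
        hence "{r, a, b} \<subseteq> Qx v" using bq by auto
        hence "card {r, a, b} \<le> card (Qx v)" using card_mono[OF e(3)] by blast
        thus False using e(2) dist by simp
      qed
      hence "{b, r} \<subseteq> sd {r, a} (Qx v) \<or> {b, a} \<subseteq> sd {r, a} (Qx v)"
        using bq dist unfolding sd_def by auto
      moreover have "finite (sd {r, a} (Qx v))" using e(3) unfolding sd_def by auto
      moreover obtain x where x: "x \<noteq> b" "{b, x} \<subseteq> sd {r, a} (Qx v)"
        using \<open>{b, r} \<subseteq> sd {r, a} (Qx v) \<or> {b, a} \<subseteq> sd {r, a} (Qx v)\<close> dist by blast
      ultimately have "card {b, x} \<le> card (sd {r, a} (Qx v))" by (intro card_mono) auto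
      hence "2 \<le> card (sd {r, a} (Qx v))" using x(1) by simp
      thus False using sdv by simp
    qed
    have "Qx v \<noteq> {}" using e(1) by auto
    hence "r \<in> dif u v \<or> a \<in> dif u v" using qx B by auto
    thus ?thesis using B by simp
  qed
  have wD: "w1 \<in> D" "w2 \<in> D" using w unfolding Cl_def by auto
  have vD: "v1 \<in> D" "v2 \<in> D" using v unfolding Cl_def by auto
  have ss_w: "dif w1 w2 \<subseteq> insert p {i \<in> {r', b}. (i \<in> dif u w1) \<noteq> (i \<in> dif u w2)}"
    using same_star[OF w(1,2) inS(1)] Seq dist wf[OF w(1)] wf[OF w(2)] by auto
  have ss_v: "dif v1 v2 \<subseteq> insert p {i \<in> {r, a}. (i \<in> dif u v1) \<noteq> (i \<in> dif u v2)}"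
    using same_star[OF v(1,2) inS(3)] Seq dist vf[OF v(1)] vf[OF v(2)] by auto
  have wr': "(r' \<in> dif u w1) \<noteq> (r' \<in> dif u w2)"
  proof
    assume "(r' \<in> dif u w1) = (r' \<in> dif u w2)"
    hence "dif w1 w2 \<subseteq> {p, b}" using ss_w by auto
    thus False using sub2 wD w(3) by blast
  qed
  have wb: "(b \<in> dif u w1) \<noteq> (b \<in> dif u w2)"
  proof
    assume "(b \<in> dif u w1) = (b \<in> dif u w2)"
    hence "dif w1 w2 \<subseteq> {p, r'}" using ss_w by auto
    thus False using sub2 wD w(3) by blast
  qed
  have wp: "w1 ! p \<noteq> w2 ! p"
  proof
    assume "w1 ! p = w2 ! p"
    hence "p \<notin> dif w1 w2" using in_dif by auto
    hence "dif w1 w2 \<subseteq> {r', b}" using ss_w by auto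
    thus False using sub2 wD w(3) by blast
  qed
  have vr: "(r \<in> dif u v1) \<noteq> (r \<in> dif u v2)"
  proof
    assume "(r \<in> dif u v1) = (r \<in> dif u v2)"
    hence "dif v1 v2 \<subseteq> {p, a}" using ss_v by auto
    thus False using sub2 vD v(3) by blast
  qed
  have va: "(a \<in> dif u v1) \<noteq> (a \<in> dif u v2)"
  proof
    assume "(a \<in> dif u v1) = (a \<in> dif u v2)"
    hence "dif v1 v2 \<subseteq> {p, r}" using ss_v by auto
    thus False using sub2 vD v(3) by blast
  qed
  have vp: "v1 ! p \<noteq> v2 ! p"
  proof
    assume "v1 ! p = v2 ! p"
    hence "p \<notin> dif v1 v2" using in_dif by auto
    hence "dif v1 v2 \<subseteq> {r, a}" using ss_v by auto
    thus False using sub2 vD v(3) by blast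
  qed
  note core = cross_core[OF dist inS Seq]
  have W1: "\<exists>W1 W2. W1 \<in> Cl r \<and> W2 \<in> Cl r \<and> a \<in> dif u W1 \<and> r' \<in> dif u W1 \<and> b \<notin> dif u W1 \<and>
     a \<in> dif u W2 \<and> b \<in> dif u W2 \<and> r' \<notin> dif u W2 \<and> W1 ! p \<noteq> W2 ! p"
  proof (cases "r' \<in> dif u w1")
    case True
    thus ?thesis using wf[OF w(1)] wf[OF w(2)] wr' wb wp w by blast
  next
    case False
    thus ?thesis using wf[OF w(1)] wf[OF w(2)] wr' wb wp w by metis
  qed
  have V1: "\<exists>V1 V2. V1 \<in> Cl r' \<and> V2 \<in> Cl r' \<and> r \<in> dif u V1 \<and> a \<notin> dif u V1 \<and> b \<notin> dif u V1 \<and>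
     a \<in> dif u V2 \<and> r \<notin> dif u V2 \<and> b \<notin> dif u V2 \<and> V1 ! p \<noteq> V2 ! p"
  proof (cases "r \<in> dif u v1")
    case True
    thus ?thesis using vf[OF v(1)] vf[OF v(2)] vr va vp v by blast
  next
    case False
    thus ?thesis using vf[OF v(1)] vf[OF v(2)] vr va vp v by metis
  qed
  from W1 V1 show False using core by blast
qed

end

context pr4 begin

lemma Sw6: assumes y0: "y0 \<in> Y" "card (M y0) = 1" shows "card {a\<in>D. sp a \<in> S} \<le> 6"
proof -
  note yy = Y1[OF y0(1)]
  define Q0 where "Q0 = Q y0"
  have Q0S: "Q0 \<subseteq> S" "card Q0 = 2" "finite Q0" using yy Q0_def by auto
  have cS2: "card (S - Q0) = 2" using Q0S S4 finS by (simp add: card_Diff_subset)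
  have eq: "{a\<in>D. sp a \<in> S} = (\<Union>r\<in>S. Cl r)" unfolding Cl_def by auto
  have "card {a\<in>D. sp a \<in> S} \<le> (\<Sum>r\<in>S. card (Cl r))" unfolding eq by (rule card_UN_le[OF finS])
  also have "\<dots> = (\<Sum>r\<in>S - Q0. card (Cl r)) + (\<Sum>r\<in>Q0. card (Cl r))"
    using sum.subset_diff[OF Q0S(1) finS] by simp
  also have "\<dots> \<le> 6"
  proof (cases "\<exists>r\<in>Q0. 2 \<le> card (Cl r)")
    case True
    then obtain r where r: "r \<in> Q0" "2 \<le> card (Cl r)" by blast
    have "\<forall>r'\<in>S - Q0. card (Cl r') \<le> 1"
    proof
      fix r' assume r': "r' \<in> S - Q0"
      show "card (Cl r') \<le> 1"
      proof (rule ccontr)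
        assume "\<not> card (Cl r') \<le> 1"
        hence c2: "2 \<le> card (Cl r')" by simp
        have "r \<in> Q y0" "r' \<in> S - Q y0" using r(1) r' Q0_def by auto
        thus False using cross[OF y0 _ _ r(2) c2] by blast
      qed
    qed
    hence "(\<Sum>r\<in>S - Q0. card (Cl r)) \<le> card (S - Q0) * 1"
      using sum_bounded_above[of "S - Q0" "\<lambda>r. card (Cl r)" 1] by auto
    moreover have "(\<Sum>r\<in>Q0. card (Cl r)) \<le> card Q0 * 2"
      using sum_bounded_above[of Q0 "\<lambda>r. card (Cl r)" 2] star2 Q0S(1) by auto
    ultimately show ?thesis using cS2 Q0S(2) by simp
  next
    case False
    hence "\<forall>r\<in>Q0. card (Cl r) \<le> 1" by (auto simp: not_le)
    hence "(\<Sum>r\<in>Q0. card (Cl r)) \<le> card Q0 * 1"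
      using sum_bounded_above[of Q0 "\<lambda>r. card (Cl r)" 1] by auto
    moreover have "(\<Sum>r\<in>S - Q0. card (Cl r)) \<le> card (S - Q0) * 2"
      using sum_bounded_above[of "S - Q0" "\<lambda>r. card (Cl r)" 2] star2 by auto
    ultimately show ?thesis using cS2 Q0S(2) by simp
  qed
  finally show ?thesis .
qed

lemma Wq: assumes y: "y \<in> Y" "card (M y) = 1" and w: "w \<in> Wset" "M y \<noteq> {sp w}"
  shows "Q w = Q y"
proof -
  note yy = Y1[OF y(1)] and ww = W_basic[OF w(1)]
  obtain t where t: "M y = {t}" using y(2) card_1_singletonE by blast
  have tr: "t \<noteq> sp w" using t w(2) by auto
  have "card (M y - {sp w}) = 1" using t tr by simp
  hence h: "card (sd (Q y - {sp w}) (Qx w)) \<le> 1"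
    using YE[OF y(1) ww(1) ww(2)] le4[OF yy(1) ww(1)] by linarith
  have q1: "Q y - {sp w} = Q y" using ww(3) yy(8) by auto
  have q2: "Qx w = Q w" using ww(3) unfolding Qx_def Q_def by auto
  have cw: "card (Q w) = 2" using ww(7,8) S4 by simp
  have fw: "finite (Q w)" using ww(10) finS finite_subset by blast
  have "Q y = Q w" using sd_eq2[OF yy(10) fw] yy(5) cw h q1 q2 by simp
  thus ?thesis by simp
qed

lemma W2b: assumes y: "y1 \<in> Y" "y2 \<in> Y" "card (M y1) = 1" "card (M y2) = 1" "M y1 \<noteq> M y2"
  shows "card Wset \<le> 2"
proof -
  obtain t1 where t1: "M y1 = {t1}" using y(3) card_1_singletonE by blast
  obtain t2 where t2: "M y2 = {t2}" using y(4) card_1_singletonE by blast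
  have t12: "t1 \<noteq> t2" using t1 t2 y(5) by auto
  have yne: "y1 \<noteq> y2" using y(5) by auto
  have sub: "sp ` Wset \<subseteq> {t1, t2}"
  proof
    fix s assume "s \<in> sp ` Wset"
    then obtain w where w: "w \<in> Wset" "s = sp w" by blast
    show "s \<in> {t1, t2}"
    proof (rule ccontr)
      assume "s \<notin> {t1, t2}"
      hence "Q w = Q y1" "Q w = Q y2" using Wq[OF y(1,3) w(1)] Wq[OF y(2,4) w(1)] t1 t2 w(2) by auto
      hence "y1 = y2" using inj_one[OF y(1,2,3,4)] by simp
      thus False using yne by simp
    qed
  qed
  have inj: "inj_on sp Wset"
  proof (rule inj_onI)
    fix w w' assume w: "w \<in> Wset" "w' \<in> Wset" "sp w = sp w'"
    show "w = w'"
    proof (rule ccontr)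
      assume ne: "w \<noteq> w'"
      have "Q w = Q w'"
      proof (cases "sp w = t1")
        case True
        hence "M y2 \<noteq> {sp w}" "M y2 \<noteq> {sp w'}" using t2 t12 w(3) by auto
        thus ?thesis using Wq[OF y(2,4) w(1)] Wq[OF y(2,4) w(2)] by simp
      next
        case False
        hence "M y1 \<noteq> {sp w}" "M y1 \<noteq> {sp w'}" using t1 w(3) by auto
        thus ?thesis using Wq[OF y(1,3) w(1)] Wq[OF y(1,3) w(2)] by simp
      qed
      thus False using W1(1)[OF w(1,2) ne] w(3) by simp
    qed
  qed
  have "card Wset = card (sp ` Wset)" using card_image[OF inj] by simp
  also have "\<dots> \<le> card {t1, t2}" using sub by (intro card_mono) auto
  also have "\<dots> \<le> 2" by (rule card2_le)
  finally show ?thesis .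
qed

lemma sameM: assumes "\<forall>y\<in>Y. card (M y) = 1" "\<forall>y1\<in>Y. \<forall>y2\<in>Y. M y1 = M y2" shows "card Y \<le> 2"
proof (rule card_le2)
  show "Y \<subseteq> D" unfolding Y_def Cl_def by auto
  have compl: "Q y' = S - Q y" if yy: "y \<in> Y" "y' \<in> Y" "y \<noteq> y'" for y y'
  proof -
    note a = Y1[OF yy(1)] and b = Y1[OF yy(2)]
    have "M y = M y'" using assms(2) yy(1,2) by blast
    hence "card (dif y y') = card (sd (Q y) (Q y'))" using YY[OF yy(1,2)] unfolding sd_def by simp
    hence c: "3 \<le> card (sd (Q y) (Q y'))" using d34[OF a(1) b(1) yy(3)] by auto
    have "card (sd (Q y) (Q y')) + 2 * card (Q y \<inter> Q y') = 4" using sd_card[OF a(10) b(10)] a(5) b(5) by simp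
    hence "card (Q y \<inter> Q y') = 0" using c by linarith
    hence "Q y \<inter> Q y' = {}" using a(10) by simp
    hence sub: "Q y' \<subseteq> S - Q y" using b(8) by auto
    have "card (S - Q y) = 2" using a(5,8,10) S4 finS by (simp add: card_Diff_subset)
    thus ?thesis using card_subset_eq[OF _ sub] finS b(5) by auto
  qed
  fix x y z assume xyz: "x \<in> Y" "y \<in> Y" "z \<in> Y" and d: "x \<noteq> y" "x \<noteq> z" "y \<noteq> z"
  have "Q y = Q z" using compl[OF xyz(1,2) d(1)] compl[OF xyz(1,3) d(2)] by simp
  hence "y = z" using inj_one[OF xyz(2,3)] assms(1) xyz by auto
  thus False using d(3) by simp
qed

lemma decomp: "card D = card (Cl p) + card Wset + card {a\<in>D. sp a \<in> S}"
proof -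
  have eq: "D = (Cl p \<union> Wset) \<union> {a\<in>D. sp a \<in> S}" unfolding Cl_def Wset_def by auto
  have f: "finite (Cl p)" "finite Wset" "finite {a\<in>D. sp a \<in> S}" using finD unfolding Cl_def Wset_def by auto
  have "card D = card (Cl p \<union> Wset) + card {a\<in>D. sp a \<in> S}"
    by (subst eq, rule card_Un_disjoint) (use f pS in \<open>auto simp: Cl_def Wset_def\<close>)
  moreover have "card (Cl p \<union> Wset) = card (Cl p) + card Wset"
    by (rule card_Un_disjoint) (use f in \<open>auto simp: Cl_def Wset_def\<close>)
  ultimately show ?thesis by simp
qed

lemma decomp2: "card D = card (Cl p) + card {a\<in>D. sp a \<noteq> p}"
proof -
  have eq: "D = Cl p \<union> {a\<in>D. sp a \<noteq> p}" unfolding Cl_def by auto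
  have f: "finite (Cl p)" "finite {a\<in>D. sp a \<noteq> p}" using finD unfolding Cl_def by auto
  show ?thesis by (subst eq, rule card_Un_disjoint) (use f in \<open>auto simp: Cl_def\<close>)
qed

lemma cClp: "card (Cl p) = card Y + 2"
proof -
  have s: "{u, u'} \<subseteq> Cl p" using uD u'D spu' p_def unfolding Cl_def by auto
  have f: "finite (Cl p)" using finD unfolding Cl_def by auto
  have "card Y = card (Cl p) - card {u, u'}" unfolding Y_def using card_Diff_subset[OF _ s] by auto
  moreover have "card {u, u'} = 2" using uu by simp
  moreover have "2 \<le> card (Cl p)" using card_mono[OF f s] uu by simp
  ultimately show ?thesis by simp
qed

lemma case3': assumes c3: "3 \<le> card (Cl p)" and n16: "16 \<le> n" shows "card D \<le> n"
proof -
  have cT: "card T = n - 5" using cT S4 by simp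
  have Yne: "Y \<noteq> {}" using cClp c3 by auto
  show ?thesis
  proof (cases "\<exists>y0\<in>Y. card (M y0) = 2")
    case True
    then obtain y0 where y0: "y0 \<in> Y" "card (M y0) = 2" by blast
    have "card {a\<in>D. sp a \<noteq> p} \<le> 2" using IIa_E[OF y0] .
    moreover have "card Y \<le> card T + 1" using Ybound cT n16 by simp
    ultimately show ?thesis using decomp2 cClp cT n16 by linarith
  next
    case False
    hence all1: "\<forall>y\<in>Y. card (M y) = 1" using Y1(6,7) by fastforce
    obtain y0 where y0: "y0 \<in> Y" using Yne by blast
    have sw: "card {a\<in>D. sp a \<in> S} \<le> 6" using Sw6[OF y0] all1 y0 by auto
    show ?thesis
    proof (cases "\<exists>y1\<in>Y. \<exists>y2\<in>Y. M y1 \<noteq> M y2")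
      case True
      then obtain y1 y2 where y12: "y1 \<in> Y" "y2 \<in> Y" "M y1 \<noteq> M y2" by blast
      have "card Wset \<le> 2" using W2b[OF y12(1,2) _ _ y12(3)] all1 y12 by auto
      moreover have "card Y \<le> 6" using b1[OF all1] .
      ultimately show ?thesis using decomp cClp sw n16 by linarith
    next
      case False
      hence "card Y \<le> 2" using sameM[OF all1] by blast
      thus ?thesis using decomp cClp sw W6 n16 by linarith
    qed
  qed
qed

end

context pr begin
lemma case3: assumes "card (dif u u') = 4" "3 \<le> card (Cl (sp u))" "16 \<le> n" shows "card D \<le> n"
proof -
  have "pr4 n D u u'" unfolding pr4_def pr4_axioms_def using pr_axioms assms(1) S_def by auto
  from pr4.case3'[OF this] assms(2,3) show ?thesis unfolding p_def by simp
qed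
end

context cfg begin

theorem main: assumes n16: "16 \<le> n" shows "card D \<le> n"
proof (cases "inj_on sp D")
  case True
  hence "card D = card (sp ` D)" by (simp add: card_image)
  moreover have "sp ` D \<subseteq> {..<n}" using sp by auto
  hence "card (sp ` D) \<le> n" using card_mono[of "{..<n}" "sp ` D"] by simp
  ultimately show ?thesis by simp
next
  case False
  then obtain u u' where uu: "u \<in> D" "u' \<in> D" "u \<noteq> u'" "sp u' = sp u" unfolding inj_on_def by metis
  show ?thesis
  proof (cases "\<exists>q. 3 \<le> card (Cl q)")
    case True
    then obtain q where q: "3 \<le> card (Cl q)" by blast
    then obtain a b where ab: "a \<in> Cl q" "b \<in> Cl q" "a \<noteq> b" "card (dif a b) = 4" using pair4 by blast
    have abD: "a \<in> D" "b \<in> D" "sp a = q" "sp b = q" using ab unfolding Cl_def by auto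
    have "pr n D a b" unfolding pr_def pr_axioms_def using cfg_axioms abD ab by auto
    from pr.case3[OF this] ab abD q n16 show ?thesis by simp
  next
    case False
    have "pr n D u u'" unfolding pr_def pr_axioms_def using cfg_axioms uu by auto
    have "\<forall>r. card (Cl r) \<le> 2"
    proof
      fix r from False have "\<not> 3 \<le> card (Cl r)" by blast
      thus "card (Cl r) \<le> 2" by simp
    qed
    from pr.case2[OF \<open>pr n D u u'\<close> this] n16 show ?thesis by simp
  qed
qed

end


theorem lemma4:
  fixes n :: nat and D :: "sym list set"
  assumes "n \<ge> 16"
    and "D \<subseteq> X n"
    and "\<forall>u\<in>D. \<forall>v\<in>D. u \<noteq> v \<longrightarrow> hamming u v = 3 \<or> hamming u v = 4"
  shows "card D \<le> n"
proof -
  have "cfg n D" unfolding cfg_def using assms(2,3) by auto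
  thus ?thesis using cfg.main assms(1) by blast
qed

end
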